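(* Let $L\in\mathcal{L}$ be such that $L$ and its Banach dual $L^*$ have order continuous norms. Let $t\ge 1$ and let $A, A_1,\dots,A_m$ be nonnegative matrices that define operators on $L$. Then $$\gamma(A^{(t)})\le\gamma(A)^t,\qquad \rho_{ess}(A^{(t)})\le\rho_{ess}(A)^t,$$ $$\gamma(A_1^{(t)}\cdots A_m^{(t)})\le\gamma(A_1\cdots A_m)^t,\qquad \rho_{ess}(A_1^{(t)}\cdots A_m^{(t)})\le\rho_{ess}(A_1\cdots A_m)^t.$$
   Context: Let $R=\mathbb{N}$ or $R=\{1,\dots,N\}$. A Banach sequence space is a Banach space $L$ of complex sequences indexed by $R$ such that if $x$ is a complex sequence, $y\in L$ and $|x|\le|y|$ entrywise, then $x\in L$ and $\|x\|_L\le\|y\|_L$. $\mathcal{L}$ is the class of Banach sequence spaces containing every standard unit vector $e_n$ with $\|e_n\|_L=1$. A Banach lattice has order continuous norm if every decreasing net $0\le f_\alpha\downarrow 0$ satisfies $\|f_\alpha\|\to0$ (e.g. $\ell^p$, $1<p<\infty$, and $c_0$ together with their duals satisfy the hypothesis). A nonnegative matrix $A=[a_{ij}]_{i,j\in R}$ defines an operator on $L$ if for every $x\in L$ the sums $(Ax)_i=\sum_{j}a_{ij}x_j$ converge absolutely and $Ax\in L$; it is then a bounded positive operator on $L$. For $t>0$, the Hadamard power is $A^{(t)}=[a_{ij}^t]$ (it is known that for $t\ge1$ it again defines an operator on $L$). For a bounded operator $T$ on $L$, $\gamma(T)$ is the Hausdorff measure of noncompactness: $\gamma(T)=\inf\{\delta>0:\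 T(D_L)\subseteq M+\delta D_L \text{ for some finite } M\subset L\}$, where $D_L$ is the closed unit ball of $L$; $\rho_{ess}(T)$ is the essential spectral radius, i.e. the spectral radius of the image of $T$ in the Calkin algebra $B(L)/K(L)$; equivalently $\rho_{ess}(T)=\lim_{j\to\infty}\gamma(T^j)^{1/j}$. *)

theory Defs
  imports "HOL-Analysis.Analysis"
begin

type_synonym cseq = "nat \<Rightarrow> complex"

definition index_set :: "nat set \<Rightarrow> bool" where
  "index_set R \<longleftrightarrow> R = UNIV \<or> (\<exists>N::nat. N \<ge> 1 \<and> R = {1..N})"

definition banach_seq_space :: "nat set \<Rightarrow> cseq set \<Rightarrow> (cseq \<Rightarrow> real) \<Rightarrow> bool" where
  "banach_seq_space R S nrm \<longleftrightarrow>
     index_set R \<and>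
     (\<forall>x\<in>S. \<forall>i. i \<notin> R \<longrightarrow> x i = 0) \<and>
     (\<lambda>i. 0) \<in> S \<and>
     (\<forall>x\<in>S. \<forall>y\<in>S. (\<lambda>i. x i + y i) \<in> S) \<and>
     (\<forall>x\<in>S. \<forall>c::complex. (\<lambda>i. c * x i) \<in> S) \<and>
     (\<forall>x\<in>S. 0 \<le> nrm x) \<and>
     (\<forall>x\<in>S. nrm x = 0 \<longleftrightarrow> x = (\<lambda>i. 0)) \<and>
     (\<forall>x\<in>S. \<forall>c::complex. nrm (\<lambda>i. c * x i) = cmod c * nrm x) \<and>
     (\<forall>x\<in>S. \<forall>y\<in>S. nrm (\<lambda>i. x i + y i) \<le> nrm x + nrm y) \<and>
     \<comment> \<open>completeness\<close>
     (\<forall>X::nat \<Rightarrow> cseq. (\<forall>n. X n \<in> S) \<and>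
        (\<forall>e>0. \<exists>M. \<forall>m\<ge>M. \<forall>n\<ge>M. nrm (\<lambda>i. X m i - X n i) < e) \<longrightarrow>
        (\<exists>x\<in>S. \<forall>e>0. \<exists>M. \<forall>n\<ge>M. nrm (\<lambda>i. X n i - x i) < e)) \<and>
     \<comment> \<open>lattice ideal property\<close>
     (\<forall>x y. y \<in> S \<and> (\<forall>i. cmod (x i) \<le> cmod (y i)) \<longrightarrow> x \<in> S \<and> nrm x \<le> nrm y)"

definition unit_vec :: "nat \<Rightarrow> cseq" where
  "unit_vec n = (\<lambda>i. if i = n then 1 else 0)"

definition in_class_L :: "nat set \<Rightarrow> cseq set \<Rightarrow> (cseq \<Rightarrow> real) \<Rightarrow> bool" where
  "in_class_L R S nrm \<longleftrightarrow> banach_seq_space R S nrm \<and>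
     (\<forall>n\<in>R. unit_vec n \<in> S \<and> nrm (unit_vec n) = 1)"

definition nonneg_seq :: "cseq \<Rightarrow> bool" where
  "nonneg_seq f \<longleftrightarrow> (\<forall>i. f i \<in> \<real> \<and> 0 \<le> Re (f i))"

definition real_seq :: "cseq \<Rightarrow> bool" where
  "real_seq f \<longleftrightarrow> (\<forall>i. f i \<in> \<real>)"

text \<open>Order continuity: every decreasing net \<open>0 \<le> f\<^sub>\<alpha> \<down> 0\<close> has norms tending to 0.
  A decreasing net is represented by its range, a nonempty downward directed set D of
  positive elements; its norms decrease, so they tend to 0 iff their infimum is 0.\<close>
definition order_continuous_seq :: "cseq set \<Rightarrow> (cseq \<Rightarrow> real) \<Rightarrow> bool" where
  "order_continuous_seq S nrm \<longleftrightarrow>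
     (\<forall>D. D \<subseteq> S \<and> D \<noteq> {} \<and> (\<forall>f\<in>D. nonneg_seq f) \<and>
          (\<forall>f\<in>D. \<forall>g\<in>D. \<exists>h\<in>D. \<forall>i. Re (h i) \<le> Re (f i) \<and> Re (h i) \<le> Re (g i)) \<and>
          (\<forall>h\<in>S. real_seq h \<and> (\<forall>f\<in>D. \<forall>i. Re (h i) \<le> Re (f i)) \<longrightarrow> (\<forall>i. Re (h i) \<le> 0))
        \<longrightarrow> (INF f\<in>D. nrm f) = 0)"

definition dual_space :: "cseq set \<Rightarrow> (cseq \<Rightarrow> real) \<Rightarrow> (cseq \<Rightarrow> complex) set" where
  "dual_space S nrm = {\<phi>.
     (\<forall>x. x \<notin> S \<longrightarrow> \<phi> x = 0) \<and>
     (\<forall>x\<in>S. \<forall>y\<in>S. \<phi> (\<lambda>i. x i + y i) = \<phi> x + \<phi> y) \<and>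
     (\<forall>x\<in>S. \<forall>c. \<phi> (\<lambda>i. c * x i) = c * \<phi> x) \<and>
     (\<exists>C. \<forall>x\<in>S. cmod (\<phi> x) \<le> C * nrm x)}"

definition dual_norm :: "cseq set \<Rightarrow> (cseq \<Rightarrow> real) \<Rightarrow> (cseq \<Rightarrow> complex) \<Rightarrow> real" where
  "dual_norm S nrm \<phi> = (SUP x\<in>{x\<in>S. nrm x \<le> 1}. cmod (\<phi> x))"

definition dual_positive :: "cseq set \<Rightarrow> (cseq \<Rightarrow> complex) \<Rightarrow> bool" where
  "dual_positive S \<phi> \<longleftrightarrow> (\<forall>x\<in>S. nonneg_seq x \<longrightarrow> \<phi> x \<in> \<real> \<and> 0 \<le> Re (\<phi> x))"

definition dual_real :: "cseq set \<Rightarrow> (cseq \<Rightarrow> complex) \<Rightarrow> bool" where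
  "dual_real S \<phi> \<longleftrightarrow> (\<forall>x\<in>S. real_seq x \<longrightarrow> \<phi> x \<in> \<real>)"

definition order_continuous_dual :: "cseq set \<Rightarrow> (cseq \<Rightarrow> real) \<Rightarrow> bool" where
  "order_continuous_dual S nrm \<longleftrightarrow>
     (\<forall>D. D \<subseteq> dual_space S nrm \<and> D \<noteq> {} \<and> (\<forall>\<phi>\<in>D. dual_positive S \<phi>) \<and>
          (\<forall>\<phi>\<in>D. \<forall>\<psi>\<in>D. \<exists>\<eta>\<in>D. \<forall>x\<in>S. nonneg_seq x \<longrightarrow>
               Re (\<eta> x) \<le> Re (\<phi> x) \<and> Re (\<eta> x) \<le> Re (\<psi> x)) \<and>
          (\<forall>\<eta>\<in>dual_space S nrm. dual_real S \<eta> \<and>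
               (\<forall>\<phi>\<in>D. \<forall>x\<in>S. nonneg_seq x \<longrightarrow> Re (\<eta> x) \<le> Re (\<phi> x))
             \<longrightarrow> (\<forall>x\<in>S. nonneg_seq x \<longrightarrow> Re (\<eta> x) \<le> 0))
        \<longrightarrow> (INF \<phi>\<in>D. dual_norm S nrm \<phi>) = 0)"

definition nonneg_matrix :: "nat set \<Rightarrow> (nat \<Rightarrow> nat \<Rightarrow> real) \<Rightarrow> bool" where
  "nonneg_matrix R A \<longleftrightarrow> (\<forall>i\<in>R. \<forall>j\<in>R. 0 \<le> A i j)"

definition mat_op :: "nat set \<Rightarrow> (nat \<Rightarrow> nat \<Rightarrow> real) \<Rightarrow> cseq \<Rightarrow> cseq" where
  "mat_op R A x = (\<lambda>i. if i \<in> R then (\<Sum>\<^sub>\<infinity>j\<in>R. complex_of_real (A i j) * x j) else 0)"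

definition defines_operator :: "nat set \<Rightarrow> cseq set \<Rightarrow> (nat \<Rightarrow> nat \<Rightarrow> real) \<Rightarrow> bool" where
  "defines_operator R S A \<longleftrightarrow>
     (\<forall>x\<in>S. (\<forall>i\<in>R. (\<lambda>j. norm (complex_of_real (A i j) * x j)) summable_on R) \<and>
            mat_op R A x \<in> S)"

definition hadamard_pow :: "(nat \<Rightarrow> nat \<Rightarrow> real) \<Rightarrow> real \<Rightarrow> (nat \<Rightarrow> nat \<Rightarrow> real)" where
  "hadamard_pow A t = (\<lambda>i j. A i j powr t)"

definition prod_op :: "nat set \<Rightarrow> (nat \<Rightarrow> nat \<Rightarrow> real) list \<Rightarrow> cseq \<Rightarrow> cseq" where
  "prod_op R As = foldr (\<lambda>A T. mat_op R A \<circ> T) As id"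

definition unit_ball :: "cseq set \<Rightarrow> (cseq \<Rightarrow> real) \<Rightarrow> cseq set" where
  "unit_ball S nrm = {x\<in>S. nrm x \<le> 1}"

definition hmnc :: "cseq set \<Rightarrow> (cseq \<Rightarrow> real) \<Rightarrow> (cseq \<Rightarrow> cseq) \<Rightarrow> real" where
  "hmnc S nrm T = Inf {\<delta>. \<delta> > 0 \<and> (\<exists>M. finite M \<and> M \<subseteq> S \<and>
       T ` unit_ball S nrm \<subseteq> {(\<lambda>i. m i + complex_of_real \<delta> * y i) | m y. m \<in> M \<and> y \<in> unit_ball S nrm})}"

definition ess_spec_rad :: "cseq set \<Rightarrow> (cseq \<Rightarrow> real) \<Rightarrow> (cseq \<Rightarrow> cseq) \<Rightarrow> real" where
  "ess_spec_rad S nrm T = lim (\<lambda>j. root j (hmnc S nrm (T ^^ j)))"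

end

theory Submission
  imports Defs
begin


locale bss =
  fixes R :: "nat set" and S :: "cseq set" and nrm :: "cseq \<Rightarrow> real"
  assumes L: "in_class_L R S nrm" and oc: "order_continuous_seq S nrm"
begin

lemma B: "banach_seq_space R S nrm" using L by (simp add: in_class_L_def)

lemma supp: "x \<in> S \<Longrightarrow> i \<notin> R \<Longrightarrow> x i = 0" using B by (simp add: banach_seq_space_def)
lemma zero_in: "(\<lambda>i. 0) \<in> S" using B by (simp add: banach_seq_space_def)
lemma add_in: "x \<in> S \<Longrightarrow> y \<in> S \<Longrightarrow> (\<lambda>i. x i + y i) \<in> S" using B by (simp add: banach_seq_space_def)
lemma smul_in: "x \<in> S \<Longrightarrow> (\<lambda>i. c * x i) \<in> S" using B by (simp add: banach_seq_space_def)
lemma nrm_nonneg: "x \<in> S \<Longrightarrow> 0 \<le> nrm x" using B by (simp add: banach_seq_space_def)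
lemma nrm_zero_iff: "x \<in> S \<Longrightarrow> nrm x = 0 \<longleftrightarrow> x = (\<lambda>i. 0)" using B by (simp add: banach_seq_space_def)
lemma nrm_smul: "x \<in> S \<Longrightarrow> nrm (\<lambda>i. c * x i) = cmod c * nrm x" using B by (simp add: banach_seq_space_def)
lemma nrm_tri: "x \<in> S \<Longrightarrow> y \<in> S \<Longrightarrow> nrm (\<lambda>i. x i + y i) \<le> nrm x + nrm y"
  using B by (simp add: banach_seq_space_def)
lemma ideal0: "\<forall>x y. y \<in> S \<and> (\<forall>i. cmod (x i) \<le> cmod (y i)) \<longrightarrow> x \<in> S \<and> nrm x \<le> nrm y"
  using B by (simp add: banach_seq_space_def)
lemma ideal: "y \<in> S \<Longrightarrow> (\<And>i. cmod (x i) \<le> cmod (y i)) \<Longrightarrow> x \<in> S \<and> nrm x \<le> nrm y"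
  using ideal0 by blast
lemma complete:
  fixes X :: "nat \<Rightarrow> cseq"
  assumes a1: "\<And>n. X n \<in> S" and a2: "\<And>e. e>0 \<Longrightarrow> \<exists>M. \<forall>m\<ge>M. \<forall>n\<ge>M. nrm (\<lambda>i. X m i - X n i) < e"
  shows "\<exists>x\<in>S. \<forall>e>0. \<exists>M. \<forall>n\<ge>M. nrm (\<lambda>i. X n i - x i) < e"
proof -
  have *: "\<forall>X::nat \<Rightarrow> cseq. (\<forall>n. X n \<in> S) \<and>
        (\<forall>e>0. \<exists>M. \<forall>m\<ge>M. \<forall>n\<ge>M. nrm (\<lambda>i. X m i - X n i) < e) \<longrightarrow>
        (\<exists>x\<in>S. \<forall>e>0. \<exists>M. \<forall>n\<ge>M. nrm (\<lambda>i. X n i - x i) < e)"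
    using B by (simp add: banach_seq_space_def)
  have "(\<forall>n. X n \<in> S) \<and> (\<forall>e>0. \<exists>M. \<forall>m\<ge>M. \<forall>n\<ge>M. nrm (\<lambda>i. X m i - X n i) < e)"
    using a1 a2 by blast
  thus ?thesis using spec[OF *, of X] by (rule mp[rotated])
qed
lemma uv: "n \<in> R \<Longrightarrow> unit_vec n \<in> S \<and> nrm (unit_vec n) = 1"
  using L by (simp add: in_class_L_def)

lemma zero_nrm: "nrm (\<lambda>i. 0) = 0" using nrm_zero_iff zero_in by blast

lemma neg_in: "x \<in> S \<Longrightarrow> (\<lambda>i. - x i) \<in> S" using smul_in[of x "-1"] by simp
lemma diff_in: "x \<in> S \<Longrightarrow> y \<in> S \<Longrightarrow> (\<lambda>i. x i - y i) \<in> S"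
  using add_in[OF _ neg_in, of x y] by simp

lemma ideal_in: "y \<in> S \<Longrightarrow> (\<And>i. cmod (x i) \<le> cmod (y i)) \<Longrightarrow> x \<in> S" using ideal by blast
lemma ideal_le: "y \<in> S \<Longrightarrow> (\<And>i. cmod (x i) \<le> cmod (y i)) \<Longrightarrow> nrm x \<le> nrm y" using ideal by blast

lemma nrm_eq: "x \<in> S \<Longrightarrow> (\<And>i. cmod (x i) = cmod (y i)) \<Longrightarrow> y \<in> S \<and> nrm y = nrm x"
  using ideal by (metis order_refl antisym)

lemma nrm_neg: "x \<in> S \<Longrightarrow> nrm (\<lambda>i. - x i) = nrm x"
  using nrm_eq[of x "\<lambda>i. - x i"] by simp

lemma nrm_comm: "x \<in> S \<Longrightarrow> y \<in> S \<Longrightarrow> nrm (\<lambda>i. x i - y i) = nrm (\<lambda>i. y i - x i)"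
  using nrm_eq[of "\<lambda>i. x i - y i" "\<lambda>i. y i - x i"] diff_in by (simp add: norm_minus_commute)

lemma nrm_tri_diff: "x \<in> S \<Longrightarrow> y \<in> S \<Longrightarrow> nrm (\<lambda>i. x i - y i) \<le> nrm x + nrm y"
  using nrm_tri[OF _ neg_in, of x y] nrm_neg[of y] by simp

lemma coord: assumes "x \<in> S" shows "cmod (x i) \<le> nrm x"
proof (cases "i \<in> R")
  case False thus ?thesis using supp[OF assms False] nrm_nonneg[OF assms] by simp
next
  case True
  have "nrm (\<lambda>k. x i * unit_vec i k) \<le> nrm x"
    by (rule ideal_le[OF assms]) (auto simp: unit_vec_def)
  moreover have "nrm (\<lambda>k. x i * unit_vec i k) = cmod (x i)"
    using nrm_smul[of "unit_vec i" "x i"] uv[OF True] by simp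
  ultimately show ?thesis by (metis (no_types))
qed

definition absv :: "cseq \<Rightarrow> cseq" where "absv x = (\<lambda>i. complex_of_real (cmod (x i)))"

lemma absv: "x \<in> S \<Longrightarrow> absv x \<in> S \<and> nrm (absv x) = nrm x"
  using nrm_eq[of x "absv x"] by (simp add: absv_def)

definition Pn :: "nat \<Rightarrow> cseq \<Rightarrow> cseq" where "Pn n x = (\<lambda>i. if i < n then x i else 0)"
definition Qn :: "nat \<Rightarrow> cseq \<Rightarrow> cseq" where "Qn n x = (\<lambda>i. if n \<le> i then x i else 0)"

lemma Pn: "x \<in> S \<Longrightarrow> Pn n x \<in> S \<and> nrm (Pn n x) \<le> nrm x"
  using ideal[of x "Pn n x"] by (simp add: Pn_def)
lemma Qn: "x \<in> S \<Longrightarrow> Qn n x \<in> S \<and> nrm (Qn n x) \<le> nrm x"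
  using ideal[of x "Qn n x"] by (simp add: Qn_def)
lemma PQ: "x = (\<lambda>i. Pn n x i + Qn n x i)" by (auto simp: Pn_def Qn_def)

lemma Qn_mono: "x \<in> S \<Longrightarrow> n \<le> m \<Longrightarrow> nrm (Qn m x) \<le> nrm (Qn n x)"
  using ideal[of "Qn n x" "Qn m x"] Qn by (auto simp: Qn_def)

lemma nrm_Qn_abs: "x \<in> S \<Longrightarrow> nrm (Qn n x) = nrm (\<lambda>i. if n \<le> i then complex_of_real (cmod (x i)) else 0)"
  using nrm_eq[of "Qn n x" "\<lambda>i. if n \<le> i then complex_of_real (cmod (x i)) else 0"] Qn
  by (auto simp: Qn_def)

lemma tail_inf: assumes x: "x \<in> S" shows "(INF n. nrm (Qn n x)) = 0"
proof -
  define f where "f n = (\<lambda>i. if n \<le> i then complex_of_real (cmod (x i)) else 0)" for n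
  define D where "D = range f"
  have fS: "f n \<in> S" for n using ideal_in[OF x, of "f n"] by (auto simp: f_def)
  have "(INF g\<in>D. nrm g) = 0"
    using oc unfolding order_continuous_seq_def
  proof (elim allE impE)
    show "D \<subseteq> S \<and> D \<noteq> {} \<and> (\<forall>f\<in>D. nonneg_seq f) \<and>
      (\<forall>f\<in>D. \<forall>g\<in>D. \<exists>h\<in>D. \<forall>i. Re (h i) \<le> Re (f i) \<and> Re (h i) \<le> Re (g i)) \<and>
      (\<forall>h\<in>S. real_seq h \<and> (\<forall>f\<in>D. \<forall>i. Re (h i) \<le> Re (f i)) \<longrightarrow> (\<forall>i. Re (h i) \<le> 0))"
    proof (intro conjI ballI)
      show "D \<subseteq> S" using fS by (auto simp: D_def)
      show "D \<noteq> {}" by (simp add: D_def)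
      fix g assume "g \<in> D" thus "nonneg_seq g" by (auto simp: D_def f_def nonneg_seq_def)
    next
      fix g h assume "g \<in> D" "h \<in> D"
      then obtain a b where "g = f a" "h = f b" by (auto simp: D_def)
      moreover have "f (max a b) \<in> D" by (simp add: D_def)
      ultimately show "\<exists>k\<in>D. \<forall>i. Re (k i) \<le> Re (g i) \<and> Re (k i) \<le> Re (h i)"
        by (intro bexI[of _ "f (max a b)"]) (auto simp: f_def)
    next
      fix h assume "h \<in> S"
      show "real_seq h \<and> (\<forall>f\<in>D. \<forall>i. Re (h i) \<le> Re (f i)) \<longrightarrow> (\<forall>i. Re (h i) \<le> 0)"
      proof (intro impI allI)
        fix i assume "real_seq h \<and> (\<forall>f\<in>D. \<forall>i. Re (h i) \<le> Re (f i))"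
        hence "Re (h i) \<le> Re (f (Suc i) i)" by (auto simp: D_def)
        thus "Re (h i) \<le> 0" by (simp add: f_def)
      qed
    qed
  qed
  moreover have "(\<lambda>n. nrm (Qn n x)) = (\<lambda>n. nrm (f n))" 
    by (rule ext) (simp only: nrm_Qn_abs[OF x] f_def)
  moreover have "(INF g\<in>D. nrm g) = (INF n. nrm (f n))" unfolding D_def by (simp add: image_comp)
  ultimately show ?thesis by (metis (no_types))
qed

lemma tail_lim: assumes x: "x \<in> S" shows "(\<lambda>n. nrm (Qn n x)) \<longlonglongrightarrow> 0"
proof -
  have dec: "decseq (\<lambda>n. nrm (Qn n x))" using Qn_mono[OF x] by (simp add: decseq_def)
  have bdd: "bdd_below (range (\<lambda>n. nrm (Qn n x)))"
    using Qn[OF x] nrm_nonneg by (intro bdd_belowI[of _ 0]) auto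
  from LIMSEQ_decseq_INF[OF bdd dec] tail_inf[OF x] show ?thesis by simp
qed

lemma tail_small: assumes x: "x \<in> S" and e: "e > 0" shows "\<exists>N. \<forall>n\<ge>N. nrm (Qn n x) \<le> e"
proof -
  obtain N where N: "\<And>n. n \<ge> N \<Longrightarrow> norm (nrm (Qn n x) - 0) < e"
    using LIMSEQ_D[OF tail_lim[OF x] e] by blast
  have "nrm (Qn n x) \<le> e" if "n \<ge> N" for n
  proof -
    have "\<bar>nrm (Qn n x)\<bar> < e" using N[OF that] by simp
    thus ?thesis by linarith
  qed
  thus ?thesis by blast
qed

lemma tail_small_fin: assumes M: "finite M" "M \<subseteq> S" and e: "e > 0"
  shows "\<exists>N. \<forall>m\<in>M. nrm (Qn N m) \<le> e"
  using M
proof (induction M rule: finite_induct)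
  case empty thus ?case by simp
next
  case (insert a M)
  have aS: "a \<in> S" and MS: "M \<subseteq> S" using insert.prems by auto
  obtain N1 where N1: "\<forall>m\<in>M. nrm (Qn N1 m) \<le> e" using insert.IH[OF MS] by blast
  obtain N2 where N2: "\<forall>n\<ge>N2. nrm (Qn n a) \<le> e" using tail_small[OF aS e] by blast
  show ?case
  proof (intro exI[of _ "max N1 N2"] ballI)
    fix m assume m: "m \<in> insert a M"
    show "nrm (Qn (max N1 N2) m) \<le> e"
    proof (cases "m = a")
      case True
      have "max N1 N2 \<ge> N2" by simp
      thus ?thesis using N2 True by blast
    next
      case False hence mM: "m \<in> M" using m by simp
      hence "m \<in> S" using MS by blast
      hence "nrm (Qn (max N1 N2) m) \<le> nrm (Qn N1 m)" using Qn_mono[of m N1 "max N1 N2"] by simp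
      thus ?thesis using N1 mM by fastforce
    qed
  qed
qed

end


context bss
begin

definition lin_op :: "(cseq \<Rightarrow> cseq) \<Rightarrow> bool" where
  "lin_op T \<longleftrightarrow> (\<forall>x\<in>S. T x \<in> S) \<and> (\<forall>x\<in>S. \<forall>y\<in>S. T (\<lambda>i. x i + y i) = (\<lambda>i. T x i + T y i)) \<and>
     (\<forall>x\<in>S. \<forall>c. T (\<lambda>i. c * x i) = (\<lambda>i. c * T x i)) \<and> (\<exists>K. \<forall>x\<in>S. nrm (T x) \<le> K * nrm x)"

lemma lin_in: "lin_op T \<Longrightarrow> x \<in> S \<Longrightarrow> T x \<in> S" unfolding lin_op_def by blast
lemma lin_add: "lin_op T \<Longrightarrow> x \<in> S \<Longrightarrow> y \<in> S \<Longrightarrow> T (\<lambda>i. x i + y i) = (\<lambda>i. T x i + T y i)"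
  unfolding lin_op_def by blast
lemma lin_smul: "lin_op T \<Longrightarrow> x \<in> S \<Longrightarrow> T (\<lambda>i. c * x i) = (\<lambda>i. c * T x i)"
  unfolding lin_op_def by blast
lemma lin_bound: assumes "lin_op T" obtains K where "K \<ge> 0" "\<And>x. x \<in> S \<Longrightarrow> nrm (T x) \<le> K * nrm x"
proof -
  obtain K where K: "\<forall>x\<in>S. nrm (T x) \<le> K * nrm x" using assms unfolding lin_op_def by blast
  show ?thesis
  proof (rule that[of "max K 0"])
    fix x assume x: "x \<in> S"
    have "K * nrm x \<le> max K 0 * nrm x" using nrm_nonneg[OF x] by (simp add: mult_right_mono)
    thus "nrm (T x) \<le> max K 0 * nrm x" using K x by fastforce
  qed simp
qed

lemma lin_zero: assumes "lin_op T" shows "T (\<lambda>i. 0) = (\<lambda>i. 0)"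
  using lin_smul[OF assms zero_in, of 0] by simp

lemma lin_neg: assumes "lin_op T" "x \<in> S" shows "T (\<lambda>i. - x i) = (\<lambda>i. - T x i)"
  using lin_smul[OF assms, of "-1"] by simp

lemma lin_diff: assumes "lin_op T" "x \<in> S" "y \<in> S" shows "T (\<lambda>i. x i - y i) = (\<lambda>i. T x i - T y i)"
  using lin_add[OF assms(1,2) neg_in[OF assms(3)]] lin_neg[OF assms(1,3)] by simp

lemma sum_in: "finite K \<Longrightarrow> (\<And>k. k \<in> K \<Longrightarrow> f k \<in> S) \<Longrightarrow> (\<lambda>i. \<Sum>k\<in>K. f k i) \<in> S"
proof (induction K rule: finite_induct)
  case empty thus ?case using zero_in by simp
next
  case (insert a K) thus ?case using add_in[of "f a" "\<lambda>i. \<Sum>k\<in>K. f k i"] by simp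
qed

lemma nrm_sum: "finite K \<Longrightarrow> (\<And>k. k \<in> K \<Longrightarrow> f k \<in> S) \<Longrightarrow> nrm (\<lambda>i. \<Sum>k\<in>K. f k i) \<le> (\<Sum>k\<in>K. nrm (f k))"
proof (induction K rule: finite_induct)
  case empty thus ?case using zero_nrm by simp
next
  case (insert a K)
  have "nrm (\<lambda>i. \<Sum>k\<in>insert a K. f k i) = nrm (\<lambda>i. f a i + (\<Sum>k\<in>K. f k i))"
    using insert.hyps by simp
  also have "\<dots> \<le> nrm (f a) + nrm (\<lambda>i. \<Sum>k\<in>K. f k i)"
    using nrm_tri[of "f a" "\<lambda>i. \<Sum>k\<in>K. f k i"] sum_in[OF insert.hyps(1)] insert.prems by simp
  also have "\<dots> \<le> nrm (f a) + (\<Sum>k\<in>K. nrm (f k))" using insert by simp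
  finally show ?case using insert.hyps by simp
qed

lemma lin_sum: assumes T: "lin_op T" shows "finite K \<Longrightarrow> (\<And>k. k \<in> K \<Longrightarrow> f k \<in> S) \<Longrightarrow>
   T (\<lambda>i. \<Sum>k\<in>K. f k i) = (\<lambda>i. \<Sum>k\<in>K. T (f k) i)"
proof (induction K rule: finite_induct)
  case empty thus ?case using lin_zero[OF T] by simp
next
  case (insert a K)
  have "T (\<lambda>i. \<Sum>k\<in>insert a K. f k i) = T (\<lambda>i. f a i + (\<Sum>k\<in>K. f k i))"
    using insert.hyps by simp
  also have "\<dots> = (\<lambda>i. T (f a) i + T (\<lambda>i. \<Sum>k\<in>K. f k i) i)"
    using lin_add[OF T, of "f a" "\<lambda>i. \<Sum>k\<in>K. f k i"] sum_in[OF insert.hyps(1)] insert.prems by simp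
  finally show ?case using insert by simp
qed

lemma lin_comp: assumes "lin_op T" "lin_op U" shows "lin_op (T \<circ> U)"
proof -
  obtain K1 where K1: "K1 \<ge> 0" "\<And>x. x \<in> S \<Longrightarrow> nrm (T x) \<le> K1 * nrm x" using lin_bound[OF assms(1)] by blast
  obtain K2 where K2: "K2 \<ge> 0" "\<And>x. x \<in> S \<Longrightarrow> nrm (U x) \<le> K2 * nrm x" using lin_bound[OF assms(2)] by blast
  have "nrm (T (U x)) \<le> (K1 * K2) * nrm x" if x: "x \<in> S" for x
  proof -
    have "nrm (T (U x)) \<le> K1 * nrm (U x)" using K1(2) lin_in[OF assms(2) x] by blast
    also have "\<dots> \<le> K1 * (K2 * nrm x)" using K2(2)[OF x] K1(1) by (rule mult_left_mono)
    finally show ?thesis by simp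
  qed
  thus ?thesis unfolding lin_op_def o_def
    using lin_in[OF assms(1)] lin_in[OF assms(2)] lin_add[OF assms(1)] lin_add[OF assms(2)]
       lin_smul[OF assms(1)] lin_smul[OF assms(2)] by (intro conjI ballI allI exI[of _ "K1*K2"]) simp_all
qed

lemma lin_id: "lin_op id"
  unfolding lin_op_def by (intro conjI ballI allI exI[of _ 1]) simp_all

lemma lin_funpow: "lin_op T \<Longrightarrow> lin_op (T ^^ n)"
  by (induction n) (simp_all add: lin_id lin_comp)

lemma Pn_sum: assumes x: "x \<in> S"
  shows "Pn N x = (\<lambda>i. \<Sum>k\<in>{..<N} \<inter> R. x k * unit_vec k i)"
proof
  fix i
  show "Pn N x i = (\<Sum>k\<in>{..<N} \<inter> R. x k * unit_vec k i)"
  proof (cases "i \<in> R \<and> i < N")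
    case True
    have "(\<Sum>k\<in>{..<N} \<inter> R. x k * unit_vec k i) = (\<Sum>k\<in>{i}. x k * unit_vec k i)"
      by (rule sum.mono_neutral_right) (use True in \<open>auto simp: unit_vec_def\<close>)
    thus ?thesis using True by (simp add: Pn_def unit_vec_def)
  next
    case False
    have "(\<Sum>k\<in>{..<N} \<inter> R. x k * unit_vec k i) = 0"
      using False by (intro sum.neutral) (auto simp: unit_vec_def)
    moreover have "Pn N x i = 0" using False supp[OF x] by (auto simp: Pn_def)
    ultimately show ?thesis by simp
  qed
qed

lemma rep: assumes T: "lin_op T" and x: "x \<in> S"
  shows "(\<lambda>N. \<Sum>k\<in>{..<N} \<inter> R. x k * T (unit_vec k) i) \<longlonglongrightarrow> T x i"
proof -
  obtain K where K: "K \<ge> 0" "\<And>x. x \<in> S \<Longrightarrow> nrm (T x) \<le> K * nrm x" using lin_bound[OF T] by blast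
  have uvS: "k \<in> {..<N} \<inter> R \<Longrightarrow> (\<lambda>i. x k * unit_vec k i) \<in> S" for k N
    using smul_in uv by blast
  have TP: "T (Pn N x) = (\<lambda>i. \<Sum>k\<in>{..<N} \<inter> R. x k * T (unit_vec k) i)" for N
  proof -
    have "T (Pn N x) = (\<lambda>i. \<Sum>k\<in>{..<N} \<inter> R. T (\<lambda>i. x k * unit_vec k i) i)"
      unfolding Pn_sum[OF x] by (rule lin_sum[OF T]) (use uvS in auto)
    also have "\<dots> = (\<lambda>i. \<Sum>k\<in>{..<N} \<inter> R. x k * T (unit_vec k) i)"
      using lin_smul[OF T] uv by (intro ext sum.cong) auto
    finally show ?thesis .
  qed
  have QPx: "Qn N x = (\<lambda>i. x i - Pn N x i)" for N by (auto simp: Qn_def Pn_def)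
  have bnd: "cmod (T x i - T (Pn N x) i) \<le> K * nrm (Qn N x)" for N
  proof -
    have "T (Qn N x) = (\<lambda>i. T x i - T (Pn N x) i)"
      unfolding QPx by (rule lin_diff[OF T x]) (use Pn[OF x] in blast)
    hence "cmod (T x i - T (Pn N x) i) = cmod (T (Qn N x) i)" by simp
    also have "\<dots> \<le> nrm (T (Qn N x))" using coord lin_in[OF T] Qn[OF x] by blast
    also have "\<dots> \<le> K * nrm (Qn N x)" using K(2) Qn[OF x] by blast
    finally show ?thesis .
  qed
  have lim0: "(\<lambda>N. K * nrm (Qn N x)) \<longlonglongrightarrow> 0"
    using tendsto_mult_right_zero[OF tail_lim[OF x]] by simp
  have "(\<lambda>N. T (Pn N x) i - T x i) \<longlonglongrightarrow> 0"
  proof (rule Lim_null_comparison[OF always_eventually lim0], rule allI)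
    fix N show "norm (T (Pn N x) i - T x i) \<le> K * nrm (Qn N x)"
      using bnd[of N] by (simp add: norm_minus_commute)
  qed
  hence "(\<lambda>N. T (Pn N x) i) \<longlonglongrightarrow> T x i" by (rule LIM_zero_cancel)
  thus ?thesis unfolding TP .
qed

end


context bss
begin

definition hset :: "(cseq \<Rightarrow> cseq) \<Rightarrow> real set" where
  "hset T = {\<delta>. \<delta> > 0 \<and> (\<exists>M. finite M \<and> M \<subseteq> S \<and>
       T ` unit_ball S nrm \<subseteq> {(\<lambda>i. m i + complex_of_real \<delta> * y i) | m y. m \<in> M \<and> y \<in> unit_ball S nrm})}"

lemma cmod_ofr: "r \<ge> 0 \<Longrightarrow> cmod (complex_of_real r) = r" by simp

lemma hmnc_hset: "hmnc S nrm T = Inf (hset T)" by (simp add: hmnc_def hset_def)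

lemma hset_bdd: "bdd_below (hset T)" by (rule bdd_belowI[of _ 0]) (auto simp: hset_def)

lemma in_hset:
  assumes M: "finite M" "M \<subseteq> S" and rho: "\<rho> > 0"
    and H: "\<And>x. x \<in> S \<Longrightarrow> nrm x \<le> 1 \<Longrightarrow> T x \<in> S \<and> (\<exists>m\<in>M. nrm (\<lambda>i. T x i - m i) \<le> \<rho>)"
  shows "\<rho> \<in> hset T"
  unfolding hset_def
proof (intro CollectI conjI exI[of _ M] rho M)
  show "T ` unit_ball S nrm \<subseteq> {(\<lambda>i. m i + complex_of_real \<rho> * y i) | m y. m \<in> M \<and> y \<in> unit_ball S nrm}"
  proof
  fix z assume "z \<in> T ` unit_ball S nrm"
  then obtain x where x: "x \<in> S" "nrm x \<le> 1" and z: "z = T x" by (auto simp: unit_ball_def)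
  obtain m where m: "m \<in> M" "nrm (\<lambda>i. T x i - m i) \<le> \<rho>" using H[OF x] by blast
  have TxS: "T x \<in> S" using H[OF x] by blast
  have mS: "m \<in> S" using m M by blast
  define y where "y = (\<lambda>i. complex_of_real (1/\<rho>) * (T x i - m i))"
  have yS: "y \<in> S" unfolding y_def by (rule smul_in[OF diff_in[OF TxS mS]])
  have "nrm y = cmod (complex_of_real (1/\<rho>)) * nrm (\<lambda>i. T x i - m i)"
    unfolding y_def by (rule nrm_smul[OF diff_in[OF TxS mS]])
  hence "nrm y = (1/\<rho>) * nrm (\<lambda>i. T x i - m i)" using cmod_ofr[of "1/\<rho>"] rho by simp
  also have "\<dots> \<le> (1/\<rho>) * \<rho>" using m(2) rho by (intro mult_left_mono) auto
  finally have "nrm y \<le> 1" using rho by simp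
  moreover have "z = (\<lambda>i. m i + complex_of_real \<rho> * y i)"
    unfolding z y_def using rho by (auto simp: field_simps)
  ultimately show "z \<in> {(\<lambda>i. m i + complex_of_real \<rho> * y i) | m y. m \<in> M \<and> y \<in> unit_ball S nrm}"
    using m(1) yS by (auto simp: unit_ball_def)
  qed
qed

lemma hmnc_le:
  assumes "finite M" "M \<subseteq> S" "\<rho> > 0"
    "\<And>x. x \<in> S \<Longrightarrow> nrm x \<le> 1 \<Longrightarrow> T x \<in> S \<and> (\<exists>m\<in>M. nrm (\<lambda>i. T x i - m i) \<le> \<rho>)"
  shows "hmnc S nrm T \<le> \<rho>"
  unfolding hmnc_hset by (rule cInf_lower[OF in_hset[OF assms] hset_bdd])

lemma hset_ne: assumes T: "lin_op T" shows "hset T \<noteq> {}"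
proof -
  obtain K where K: "K \<ge> 0" "\<And>x. x \<in> S \<Longrightarrow> nrm (T x) \<le> K * nrm x" using lin_bound[OF T] by blast
  have "K + 1 \<in> hset T"
  proof (rule in_hset[of "{\<lambda>i. 0}"])
    fix x assume x: "x \<in> S" "nrm x \<le> 1"
    have "nrm (T x) \<le> K * nrm x" using K(2)[OF x(1)] .
    also have "\<dots> \<le> K * 1" using x(2) K(1) by (rule mult_left_mono)
    finally show "T x \<in> S \<and> (\<exists>m\<in>{\<lambda>i. 0}. nrm (\<lambda>i. T x i - m i) \<le> K + 1)"
      using lin_in[OF T x(1)] by simp
  qed (use zero_in K in auto)
  thus ?thesis by blast
qed

lemma hmnc_nonneg: assumes T: "lin_op T" shows "0 \<le> hmnc S nrm T"
  unfolding hmnc_hset by (rule cInf_greatest[OF hset_ne[OF T]]) (auto simp: hset_def)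

lemma hmnc_gt:
  assumes T: "lin_op T" and d: "hmnc S nrm T < \<delta>"
  obtains M where "finite M" "M \<subseteq> S"
    "\<And>x. x \<in> S \<Longrightarrow> nrm x \<le> 1 \<Longrightarrow> \<exists>m\<in>M. \<exists>y\<in>S. nrm y \<le> 1 \<and> T x = (\<lambda>i. m i + complex_of_real \<delta> * y i)"
proof -
  obtain d' where d': "d' \<in> hset T" "d' < \<delta>"
    using cInf_lessD[OF hset_ne[OF T] d[unfolded hmnc_hset]] by blast
  then obtain M where M: "finite M" "M \<subseteq> S" and d'pos: "d' > 0" and
    inc: "T ` unit_ball S nrm \<subseteq> {(\<lambda>i. m i + complex_of_real d' * y i) | m y. m \<in> M \<and> y \<in> unit_ball S nrm}"
    unfolding hset_def by blast
  show ?thesis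
  proof (rule that[OF M])
    fix x assume x: "x \<in> S" "nrm x \<le> 1"
    hence "T x \<in> T ` unit_ball S nrm" by (auto simp: unit_ball_def)
    with inc obtain m y where my: "m \<in> M" "y \<in> S" "nrm y \<le> 1" "T x = (\<lambda>i. m i + complex_of_real d' * y i)"
      by (auto simp: unit_ball_def)
    define y' where "y' = (\<lambda>i. complex_of_real (d' / \<delta>) * y i)"
    have y'S: "y' \<in> S" unfolding y'_def using smul_in[OF my(2)] .
    have "nrm y' = cmod (complex_of_real (d'/\<delta>)) * nrm y" unfolding y'_def by (rule nrm_smul[OF my(2)])
    also have "cmod (complex_of_real (d'/\<delta>)) = d'/\<delta>" using d'pos d' by (intro cmod_ofr) simp
    finally have "nrm y' = (d'/\<delta>) * nrm y" .
    also have "\<dots> \<le> 1 * 1" using my(3) d'pos d' nrm_nonneg[OF my(2)] by (intro mult_mono) auto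
    finally have "nrm y' \<le> 1" by simp
    moreover have "T x = (\<lambda>i. m i + complex_of_real \<delta> * y' i)"
      unfolding my(4) y'_def using d'pos d' by (auto simp: field_simps)
    ultimately show "\<exists>m\<in>M. \<exists>y\<in>S. nrm y \<le> 1 \<and> T x = (\<lambda>i. m i + complex_of_real \<delta> * y i)"
      using my(1) y'S by blast
  qed
qed

lemma hmnc_cong: assumes "\<And>x. x \<in> S \<Longrightarrow> T x = U x" shows "hmnc S nrm T = hmnc S nrm U"
proof -
  have "T ` unit_ball S nrm = U ` unit_ball S nrm" using assms by (auto simp: unit_ball_def)
  thus ?thesis by (simp add: hmnc_def)
qed

lemma hmnc_id: "hmnc S nrm id \<le> 1"
  by (rule hmnc_le[of "{\<lambda>i. 0}"]) (use zero_in in auto)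

lemma hmnc_submult: assumes U: "lin_op U" and V: "lin_op V"
  shows "hmnc S nrm (U \<circ> V) \<le> hmnc S nrm U * hmnc S nrm V"
proof -
  let ?hU = "hmnc S nrm U" and ?hV = "hmnc S nrm V"
  have key: "hmnc S nrm (U \<circ> V) \<le> d1 * d2" if d1: "?hU < d1" and d2: "?hV < d2" for d1 d2
  proof -
    have d1p: "d1 > 0" and d2p: "d2 > 0" using d1 d2 hmnc_nonneg[OF U] hmnc_nonneg[OF V] by auto
    obtain M1 where M1: "finite M1" "M1 \<subseteq> S"
      "\<And>x. x \<in> S \<Longrightarrow> nrm x \<le> 1 \<Longrightarrow> \<exists>m\<in>M1. \<exists>y\<in>S. nrm y \<le> 1 \<and> U x = (\<lambda>i. m i + complex_of_real d1 * y i)"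
      using hmnc_gt[OF U d1] by blast
    obtain M2 where M2: "finite M2" "M2 \<subseteq> S"
      "\<And>x. x \<in> S \<Longrightarrow> nrm x \<le> 1 \<Longrightarrow> \<exists>m\<in>M2. \<exists>y\<in>S. nrm y \<le> 1 \<and> V x = (\<lambda>i. m i + complex_of_real d2 * y i)"
      using hmnc_gt[OF V d2] by blast
    define M where "M = (\<lambda>(m1, m2). (\<lambda>i. U m2 i + complex_of_real d2 * m1 i)) ` (M1 \<times> M2)"
    have Mf: "finite M" unfolding M_def using M1(1) M2(1) by simp
    have MS: "M \<subseteq> S" unfolding M_def
    proof (clarsimp)
      fix a b assume "a \<in> M1" "b \<in> M2"
      hence "a \<in> S" "b \<in> S" using M1(2) M2(2) by auto
      thus "(\<lambda>i. U b i + complex_of_real d2 * a i) \<in> S" by (intro add_in lin_in[OF U] smul_in)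
    qed
    show ?thesis
    proof (rule hmnc_le[OF Mf MS])
      show "d1 * d2 > 0" using d1p d2p by simp
      fix x assume x: "x \<in> S" "nrm x \<le> 1"
      obtain m2 y2 where m2: "m2 \<in> M2" "y2 \<in> S" "nrm y2 \<le> 1" "V x = (\<lambda>i. m2 i + complex_of_real d2 * y2 i)"
        using M2(3)[OF x] by blast
      obtain m1 y1 where m1: "m1 \<in> M1" "y1 \<in> S" "nrm y1 \<le> 1" "U y2 = (\<lambda>i. m1 i + complex_of_real d1 * y1 i)"
        using M1(3)[OF m2(2,3)] by blast
      have m2S: "m2 \<in> S" using m2 M2 by blast
      have "U (V x) = (\<lambda>i. U m2 i + U (\<lambda>i. complex_of_real d2 * y2 i) i)"
        unfolding m2(4) by (rule lin_add[OF U m2S smul_in[OF m2(2)]])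
      also have "\<dots> = (\<lambda>i. U m2 i + complex_of_real d2 * U y2 i)" using lin_smul[OF U m2(2)] by simp
      finally have UV: "U (V x) = (\<lambda>i. (U m2 i + complex_of_real d2 * m1 i) + complex_of_real (d1 * d2) * y1 i)"
        unfolding m1(4) by (simp add: algebra_simps)
      let ?m = "\<lambda>i. U m2 i + complex_of_real d2 * m1 i"
      have mM: "?m \<in> M" unfolding M_def using m1(1) m2(1) by force
      have "nrm (\<lambda>i. (U \<circ> V) x i - ?m i) = nrm (\<lambda>i. complex_of_real (d1 * d2) * y1 i)"
        unfolding o_def UV by simp
      also have "\<dots> = cmod (complex_of_real (d1 * d2)) * nrm y1" by (rule nrm_smul[OF m1(2)])
      also have "\<dots> = d1 * d2 * nrm y1" using cmod_ofr[of "d1*d2"] d1p d2p by simp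
      also have "\<dots> \<le> d1 * d2 * 1" using m1(3) d1p d2p by (intro mult_left_mono) auto
      finally show "(U \<circ> V) x \<in> S \<and> (\<exists>m\<in>M. nrm (\<lambda>i. (U \<circ> V) x i - m i) \<le> d1 * d2)"
        using mM lin_in[OF lin_comp[OF U V] x(1)] by auto
    qed
  qed
  show ?thesis
  proof (rule ccontr)
    assume "\<not> ?thesis"
    hence gap: "hmnc S nrm (U \<circ> V) - ?hU * ?hV > 0" by simp
    define s where "s = min 1 ((hmnc S nrm (U \<circ> V) - ?hU * ?hV) / (2 * (?hU + ?hV + 1)))"
    have hU0: "?hU \<ge> 0" and hV0: "?hV \<ge> 0" using hmnc_nonneg U V by auto
    have s0: "s > 0" unfolding s_def using gap hU0 hV0 by auto
    have s1: "s \<le> 1" unfolding s_def by simp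
    have s2: "s * (?hU + ?hV + 1) \<le> (hmnc S nrm (U \<circ> V) - ?hU * ?hV) / 2"
    proof -
      have "s \<le> (hmnc S nrm (U \<circ> V) - ?hU * ?hV) / (2 * (?hU + ?hV + 1))" unfolding s_def by simp
      thus ?thesis using hU0 hV0 by (simp add: field_simps)
    qed
    have "hmnc S nrm (U \<circ> V) \<le> (?hU + s) * (?hV + s)" by (rule key) (use s0 in auto)
    also have "\<dots> = ?hU * ?hV + s * (?hU + ?hV) + s * s" by (simp add: algebra_simps)
    also have "\<dots> \<le> ?hU * ?hV + s * (?hU + ?hV) + s * 1" using s0 s1 by (intro add_left_mono mult_left_mono) auto
    also have "\<dots> = ?hU * ?hV + s * (?hU + ?hV + 1)" by (simp add: algebra_simps)
    finally have "hmnc S nrm (U \<circ> V) \<le> ?hU * ?hV + s * (?hU + ?hV + 1)" .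
    moreover have "\<forall>h P Q::real. h \<le> P + Q \<longrightarrow> Q \<le> (h-P)/2 \<longrightarrow> 0 < h-P \<longrightarrow> False" by (simp add: field_simps)
    ultimately show False using s2 gap by blast
  qed
qed

end


context bss
begin

definition good :: "(nat \<Rightarrow> nat \<Rightarrow> real) \<Rightarrow> bool" where
  "good A \<longleftrightarrow> nonneg_matrix R A \<and> defines_operator R S A"

lemma good_nn: "good A \<Longrightarrow> i \<in> R \<Longrightarrow> j \<in> R \<Longrightarrow> 0 \<le> A i j"
  by (simp add: good_def nonneg_matrix_def)

lemma good_abs: "good A \<Longrightarrow> x \<in> S \<Longrightarrow> i \<in> R \<Longrightarrow> (\<lambda>j. norm (complex_of_real (A i j) * x j)) summable_on R"
  by (simp add: good_def defines_operator_def)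

lemma good_summ: "good A \<Longrightarrow> x \<in> S \<Longrightarrow> i \<in> R \<Longrightarrow> (\<lambda>j. complex_of_real (A i j) * x j) summable_on R"
  by (rule abs_summable_summable[OF good_abs])

lemma good_in: "good A \<Longrightarrow> x \<in> S \<Longrightarrow> mat_op R A x \<in> S"
  by (simp add: good_def defines_operator_def)

lemma mo_add: assumes A: "good A" and x: "x \<in> S" and y: "y \<in> S"
  shows "mat_op R A (\<lambda>i. x i + y i) = (\<lambda>i. mat_op R A x i + mat_op R A y i)"
proof
  fix i show "mat_op R A (\<lambda>i. x i + y i) i = mat_op R A x i + mat_op R A y i"
  proof (cases "i \<in> R")
    case True
    have "(\<Sum>\<^sub>\<infinity>j\<in>R. complex_of_real (A i j) * (x j + y j)) =
          (\<Sum>\<^sub>\<infinity>j\<in>R. complex_of_real (A i j) * x j + complex_of_real (A i j) * y j)"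
      by (simp add: algebra_simps)
    also have "\<dots> = (\<Sum>\<^sub>\<infinity>j\<in>R. complex_of_real (A i j) * x j) + (\<Sum>\<^sub>\<infinity>j\<in>R. complex_of_real (A i j) * y j)"
      by (rule infsum_add[OF good_summ[OF A x True] good_summ[OF A y True]])
    finally show ?thesis using True by (simp add: mat_op_def)
  qed (simp add: mat_op_def)
qed

lemma mo_smul: assumes A: "good A" and x: "x \<in> S"
  shows "mat_op R A (\<lambda>i. c * x i) = (\<lambda>i. c * mat_op R A x i)"
proof
  fix i show "mat_op R A (\<lambda>i. c * x i) i = c * mat_op R A x i"
  proof (cases "i \<in> R")
    case True
    have "(\<Sum>\<^sub>\<infinity>j\<in>R. complex_of_real (A i j) * (c * x j)) =
          (\<Sum>\<^sub>\<infinity>j\<in>R. c * (complex_of_real (A i j) * x j))"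
      by (simp add: algebra_simps)
    also have "\<dots> = c * (\<Sum>\<^sub>\<infinity>j\<in>R. complex_of_real (A i j) * x j)"
      by (rule infsum_cmult_right) (rule good_summ[OF A x True])
    finally show ?thesis using True by (simp add: mat_op_def)
  qed (simp add: mat_op_def)
qed

lemma mo_absv: assumes A: "good A" and x: "x \<in> S" and i: "i \<in> R"
  shows "Re (mat_op R A (absv x) i) = (\<Sum>\<^sub>\<infinity>j\<in>R. A i j * cmod (x j))"
    and "(\<lambda>j. A i j * cmod (x j)) summable_on R"
proof -
  have xa: "absv x \<in> S" using absv[OF x] by blast
  have "Re (mat_op R A (absv x) i) = Re (\<Sum>\<^sub>\<infinity>j\<in>R. complex_of_real (A i j) * absv x j)"
    using i by (simp add: mat_op_def)
  also have "\<dots> = (\<Sum>\<^sub>\<infinity>j\<in>R. Re (complex_of_real (A i j) * absv x j))"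
    by (rule infsum_Re[symmetric]) (rule good_summ[OF A xa i])
  also have "\<dots> = (\<Sum>\<^sub>\<infinity>j\<in>R. A i j * cmod (x j))" by (simp add: absv_def)
  finally show "Re (mat_op R A (absv x) i) = (\<Sum>\<^sub>\<infinity>j\<in>R. A i j * cmod (x j))" .
  have "(\<lambda>j. Re (complex_of_real (A i j) * absv x j)) summable_on R"
    by (rule summable_on_Re) (rule good_summ[OF A xa i])
  thus "(\<lambda>j. A i j * cmod (x j)) summable_on R" by (simp add: absv_def)
qed

lemma mo_abs_le: assumes A: "good A" and x: "x \<in> S"
  shows "cmod (mat_op R A x i) \<le> Re (mat_op R A (absv x) i)"
proof (cases "i \<in> R")
  case True
  have "cmod (mat_op R A x i) = cmod (\<Sum>\<^sub>\<infinity>j\<in>R. complex_of_real (A i j) * x j)" using True by (simp add: mat_op_def)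
  also have "\<dots> \<le> (\<Sum>\<^sub>\<infinity>j\<in>R. cmod (complex_of_real (A i j) * x j))"
    by (rule norm_infsum_bound[OF good_abs[OF A x True]])
  also have "\<dots> = (\<Sum>\<^sub>\<infinity>j\<in>R. A i j * cmod (x j))"
    by (rule infsum_cong) (simp add: norm_mult good_nn[OF A True])
  also have "\<dots> = Re (mat_op R A (absv x) i)" using mo_absv[OF A x True] by simp
  finally show ?thesis .
qed (simp add: mat_op_def)

lemma mo_mono: assumes A: "good A" and x: "x \<in> S" and y: "y \<in> S" and le: "\<And>j. cmod (x j) \<le> cmod (y j)"
  shows "Re (mat_op R A (absv x) i) \<le> Re (mat_op R A (absv y) i)"
proof (cases "i \<in> R")
  case True
  show ?thesis unfolding mo_absv[OF A x True] mo_absv[OF A y True]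
    by (rule infsum_mono[OF mo_absv(2)[OF A x True] mo_absv(2)[OF A y True]])
       (use le good_nn[OF A True] in \<open>simp add: mult_left_mono\<close>)
qed (simp add: mat_op_def)

lemma mo_dom: assumes A: "good A" and x: "x \<in> S" and y: "y \<in> S" and le: "\<And>j. cmod (x j) \<le> cmod (y j)"
  shows "cmod (mat_op R A x i) \<le> cmod (mat_op R A (absv y) i)"
  using mo_abs_le[OF A x, of i] mo_mono[OF A x y le, of i] complex_Re_le_cmod[of "mat_op R A (absv y) i"]
  by linarith

lemma mo_nrm_dom: assumes A: "good A" and x: "x \<in> S" and y: "y \<in> S" and le: "\<And>j. cmod (x j) \<le> cmod (y j)"
  shows "nrm (mat_op R A x) \<le> nrm (mat_op R A (absv y))"
  by (rule ideal_le[OF good_in[OF A absv[OF y, THEN conjunct1]]]) (rule mo_dom[OF A x y le])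

lemma mo_zero: "mat_op R A (\<lambda>i. 0) = (\<lambda>i. 0)"
proof (rule ext)
  fix i
  have "(\<lambda>j. complex_of_real (A i j) * (0::complex)) = (\<lambda>j. 0)" by simp
  thus "mat_op R A (\<lambda>i. 0) i = 0" unfolding mat_op_def by simp
qed

lemma geom_half: "(\<Sum>k\<in>{n..<n+d}. (1/2::real)^k) = 2*(1/2)^n - 2*(1/2)^(n+d)"
proof (induction d)
  case (Suc d)
  have "(\<Sum>k\<in>{n..<n+Suc d}. (1/2::real)^k) = (\<Sum>k\<in>{n..<n+d}. (1/2::real)^k) + (1/2)^(n+d)" by simp
  also have "\<dots> = 2*(1/2)^n - 2*(1/2)^(n+d) + (1/2)^(n+d)" using Suc.IH by simp
  also have "\<dots> = 2*(1/2)^n - 2*((1/2)^(n+d) * (1/2))" by simp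
  also have "(1/2::real)^(n+d) * (1/2) = (1/2)^(n + Suc d)" by simp
  finally show ?case .
qed simp

lemma geom_half_le: "(\<Sum>k\<in>{n..<m}. (1/2::real)^k) \<le> 2*(1/2)^n"
proof (cases "n \<le> m")
  case True
  then obtain d where "m = n + d" using le_Suc_ex by blast
  thus ?thesis using geom_half[of n d] by simp
qed simp

lemma good_bounded: assumes A: "good A" shows "\<exists>K. \<forall>x\<in>S. nrm (mat_op R A x) \<le> K * nrm x"
proof (rule ccontr)
  assume H: "\<not> ?thesis"
  have "\<forall>k::nat. \<exists>x. x \<in> S \<and> nrm (mat_op R A x) > 4^k * nrm x"
  proof
    fix k :: nat
    from H have "\<not> (\<forall>x\<in>S. nrm (mat_op R A x) \<le> 4^k * nrm x)" by blast
    thus "\<exists>x. x \<in> S \<and> nrm (mat_op R A x) > 4^k * nrm x" by (auto simp: not_le)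
  qed
  then obtain X where X: "\<And>k. X k \<in> S" "\<And>k. nrm (mat_op R A (X k)) > 4^k * nrm (X k)" by metis
  have Xpos: "nrm (X k) > 0" for k
  proof (rule ccontr)
    assume "\<not> nrm (X k) > 0"
    hence "nrm (X k) = 0" using nrm_nonneg[OF X(1)[of k]] by simp
    hence "X k = (\<lambda>i. 0)" using nrm_zero_iff[OF X(1)] by simp
    thus False using X(2)[of k] by (simp add: mo_zero zero_nrm)
  qed
  define c where "c k = 1 / (2^k * nrm (X k))" for k
  have cpos: "c k > 0" for k using Xpos[of k] by (simp add: c_def)
  define u where "u k = (\<lambda>i. complex_of_real (c k) * absv (X k) i)" for k
  have XaS: "absv (X k) \<in> S" for k using absv[OF X(1)] by blast
  have uS: "u k \<in> S" for k unfolding u_def by (rule smul_in[OF XaS])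
  have nu: "nrm (u k) = (1/2)^k" for k
  proof -
    have "nrm (u k) = cmod (complex_of_real (c k)) * nrm (absv (X k))" unfolding u_def by (rule nrm_smul[OF XaS])
    also have "\<dots> = c k * nrm (X k)" using absv[OF X(1)] cpos[of k] by simp
    also have "\<dots> = (1/2)^k" using Xpos[of k] by (simp add: c_def power_one_over)
    finally show ?thesis .
  qed
  have Au: "nrm (mat_op R A (u k)) > 2^k" for k
  proof -
    have "mat_op R A (u k) = (\<lambda>i. complex_of_real (c k) * mat_op R A (absv (X k)) i)"
      unfolding u_def by (rule mo_smul[OF A XaS])
    hence "nrm (mat_op R A (u k)) = cmod (complex_of_real (c k)) * nrm (mat_op R A (absv (X k)))"
      using nrm_smul[OF good_in[OF A XaS]] by simp
    also have "\<dots> = c k * nrm (mat_op R A (absv (X k)))" using cpos[of k] by simp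
    also have "\<dots> \<ge> c k * nrm (mat_op R A (X k))"
      using mo_nrm_dom[OF A X(1) X(1), of k] cpos[of k] by (intro mult_left_mono) auto
    finally have "nrm (mat_op R A (u k)) \<ge> c k * nrm (mat_op R A (X k))" .
    moreover have "c k * nrm (mat_op R A (X k)) > c k * (4^k * nrm (X k))"
      using X(2)[of k] cpos[of k] by (intro mult_strict_left_mono) auto
    moreover have "c k * (4^k * nrm (X k)) = 2^k"
    proof -
      have "(4::real)^k = (2*2)^k" by simp
      also have "\<dots> = 2^k * 2^k" by (rule power_mult_distrib)
      finally have "c k * (4^k * nrm (X k)) = (2^k * nrm (X k)) * 2^k / (2^k * nrm (X k))"
        by (simp add: c_def)
      thus ?thesis using Xpos[of k] by simp
    qed
    ultimately show ?thesis by linarith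
  qed
  define s where "s N = (\<lambda>i. \<Sum>k<N. u k i)" for N
  have sS: "s N \<in> S" for N unfolding s_def by (rule sum_in) (use uS in auto)
  have sdiff: "nrm (\<lambda>i. s m i - s n i) \<le> 2*(1/2)^n" if "n \<le> m" for m n
  proof -
    have "(\<lambda>i. s m i - s n i) = (\<lambda>i. \<Sum>k\<in>{n..<m}. u k i)"
    proof (rule ext)
      fix i
      have "sum (\<lambda>k. u k i) {0..<n} + sum (\<lambda>k. u k i) {n..<m} = sum (\<lambda>k. u k i) {0..<m}"
        using that by (intro sum.atLeastLessThan_concat) auto
      thus "s m i - s n i = (\<Sum>k\<in>{n..<m}. u k i)" unfolding s_def lessThan_atLeast0 by (simp add: algebra_simps)
    qed
    hence "nrm (\<lambda>i. s m i - s n i) \<le> (\<Sum>k\<in>{n..<m}. nrm (u k))"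
      using nrm_sum[of "{n..<m}" u] uS by simp
    also have "\<dots> = (\<Sum>k\<in>{n..<m}. (1/2::real)^k)" using nu by simp
    also have "\<dots> \<le> 2*(1/2)^n" by (rule geom_half_le)
    finally show ?thesis .
  qed
  have "\<exists>x\<in>S. \<forall>e>0. \<exists>M. \<forall>n\<ge>M. nrm (\<lambda>i. s n i - x i) < e"
  proof (rule complete[OF sS])
    fix e :: real assume e: "e > 0"
    obtain M where M: "(1/2::real)^M < e/2" using real_arch_pow_inv[of "e/2" "1/2"] e by auto
    show "\<exists>M. \<forall>m\<ge>M. \<forall>n\<ge>M. nrm (\<lambda>i. s m i - s n i) < e"
    proof (intro exI[of _ M] allI impI)
      fix m n assume mn: "M \<le> m" "M \<le> n"
      have pw: "(1/2::real)^k \<le> (1/2)^M" if "M \<le> k" for k using that by (simp add: power_decreasing)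
      show "nrm (\<lambda>i. s m i - s n i) < e"
      proof (cases "n \<le> m")
        case True thus ?thesis using sdiff[OF True] pw[OF mn(2)] M by linarith
      next
        case False
        hence "nrm (\<lambda>i. s n i - s m i) \<le> 2*(1/2)^m" using sdiff by simp
        thus ?thesis using nrm_comm[OF sS sS, of m n] pw[OF mn(1)] M by linarith
      qed
    qed
  qed
  then obtain z where z: "z \<in> S" "\<And>e. e > 0 \<Longrightarrow> \<exists>M. \<forall>n\<ge>M. nrm (\<lambda>i. s n i - z i) < e" by blast
  have ptw: "(\<lambda>N. s N i) \<longlonglongrightarrow> z i" for i
  proof (rule LIMSEQ_I)
    fix e :: real assume "e > 0"
    then obtain M where M: "\<forall>n\<ge>M. nrm (\<lambda>i. s n i - z i) < e" using z(2) by blast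
    show "\<exists>no. \<forall>n\<ge>no. norm (s n i - z i) < e"
    proof (intro exI[of _ M] allI impI)
      fix n assume "n \<ge> M"
      thus "norm (s n i - z i) < e" using M coord[OF diff_in[OF sS z(1)], of n i] by fastforce
    qed
  qed
  have dom: "cmod (u k i) \<le> cmod (z i)" for k i
  proof -
    have "Re (u k i) \<le> Re (z i)"
    proof (rule LIMSEQ_le_const[OF tendsto_Re[OF ptw]])
      show "\<exists>N. \<forall>n\<ge>N. Re (u k i) \<le> Re (s n i)"
      proof (intro exI[of _ "Suc k"] allI impI)
        fix n assume "Suc k \<le> n"
        hence kn: "k \<in> {..<n}" by simp
        have nn: "0 \<le> Re (u j i)" for j unfolding u_def absv_def using cpos[of j] by simp
        have "Re (s n i) = (\<Sum>j<n. Re (u j i))" by (simp add: s_def)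
        moreover have "Re (u k i) \<le> (\<Sum>j<n. Re (u j i))"
          by (rule member_le_sum[OF kn]) (use nn in auto)
        ultimately show "Re (u k i) \<le> Re (s n i)" by simp
      qed
    qed
    moreover have "cmod (u k i) = Re (u k i)" unfolding u_def absv_def using cpos[of k] by (simp add: norm_mult)
    ultimately show ?thesis using complex_Re_le_cmod[of "z i"] by linarith
  qed
  have "nrm (mat_op R A (u k)) \<le> nrm (mat_op R A (absv z))" for k
    by (rule mo_nrm_dom[OF A uS z(1) dom])
  moreover obtain k where "nrm (mat_op R A (absv z)) < 2^k" using real_arch_pow[of 2] by auto
  ultimately have "nrm (mat_op R A (u k)) < 2^k" by (rule le_less_trans)
  thus False using Au[of k] by simp
qed

lemma good_lin: assumes A: "good A" shows "lin_op (mat_op R A)"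
  unfolding lin_op_def
proof (intro conjI ballI allI)
  show "\<exists>K. \<forall>x\<in>S. nrm (mat_op R A x) \<le> K * nrm x" by (rule good_bounded[OF A])
qed (simp_all add: good_in[OF A] mo_add[OF A] mo_smul[OF A])

lemma mo_entry: assumes i: "i \<in> R" and j: "j \<in> R"
  shows "mat_op R A (unit_vec j) i = complex_of_real (A i j)"
proof -
  have "(\<Sum>\<^sub>\<infinity>k\<in>R. complex_of_real (A i k) * unit_vec j k) = (\<Sum>\<^sub>\<infinity>k\<in>{j}. complex_of_real (A i k) * unit_vec j k)"
    by (rule infsum_cong_neutral) (use j in \<open>auto simp: unit_vec_def\<close>)
  thus ?thesis using i by (simp add: mat_op_def unit_vec_def)
qed

end


lemma powr_le_lin: fixes a K t :: real assumes "0 \<le> a" "a \<le> K" "1 \<le> t"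
  shows "a powr t \<le> K powr (t-1) * a"
proof (cases "a = 0")
  case True thus ?thesis using assms by simp
next
  case False
  hence ap: "a > 0" using assms by simp
  have "a powr t = a powr ((t-1) + 1)" by simp
  also have "\<dots> = a powr (t-1) * a" using powr_add[of a "t-1" 1] ap by simp
  also have "\<dots> \<le> K powr (t-1) * a" using assms ap by (intro mult_right_mono powr_mono2) auto
  finally show ?thesis .
qed

context bss
begin

lemma good_entry_bound: assumes A: "good A"
  obtains K where "K \<ge> 0" "\<And>i j. i \<in> R \<Longrightarrow> j \<in> R \<Longrightarrow> A i j \<le> K"
proof -
  obtain K where K: "K \<ge> 0" "\<And>x. x \<in> S \<Longrightarrow> nrm (mat_op R A x) \<le> K * nrm x"
    using lin_bound[OF good_lin[OF A]] by blast
  show ?thesis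
  proof (rule that[OF K(1)])
    fix i j assume i: "i \<in> R" and j: "j \<in> R"
    have "A i j \<le> cmod (complex_of_real (A i j))" by simp
    also have "\<dots> = cmod (mat_op R A (unit_vec j) i)" using mo_entry[OF i j] by simp
    also have "\<dots> \<le> nrm (mat_op R A (unit_vec j))" by (rule coord[OF good_in[OF A uv[OF j, THEN conjunct1]]])
    also have "\<dots> \<le> K * nrm (unit_vec j)" using K(2) uv[OF j] by blast
    finally show "A i j \<le> K" using uv[OF j] by simp
  qed
qed

lemma good_had: assumes A: "good A" and t: "t \<ge> 1" shows "good (hadamard_pow A t)"
proof -
  obtain K where K: "K \<ge> 0" "\<And>i j. i \<in> R \<Longrightarrow> j \<in> R \<Longrightarrow> A i j \<le> K"
    using good_entry_bound[OF A] by blast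
  define c where "c = K powr (t-1)"
  have c0: "c \<ge> 0" by (simp add: c_def)
  have ent: "A i j powr t \<le> c * A i j" if "i \<in> R" "j \<in> R" for i j
    unfolding c_def by (rule powr_le_lin[OF good_nn[OF A that] K(2)[OF that] t])
  have summ: "(\<lambda>j. norm (complex_of_real (hadamard_pow A t i j) * x j)) summable_on R"
    and le: "cmod (mat_op R (hadamard_pow A t) x i) \<le> cmod (complex_of_real c * mat_op R A (absv x) i)"
    if x: "x \<in> S" and i: "i \<in> R" for x i
  proof -
    have g: "(\<lambda>j. norm (complex_of_real c * (complex_of_real (A i j) * x j))) summable_on R"
      using summable_on_cmult_right[OF good_abs[OF A x i], of c] c0 by (simp add: norm_mult)
    have cmp: "norm (complex_of_real (hadamard_pow A t i j) * x j) \<le> norm (complex_of_real c * (complex_of_real (A i j) * x j))"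
      if j: "j \<in> R" for j
    proof -
      have "norm (complex_of_real (hadamard_pow A t i j) * x j) = A i j powr t * cmod (x j)"
        by (simp add: hadamard_pow_def norm_mult)
      also have "\<dots> \<le> c * A i j * cmod (x j)" using ent[OF i j] by (intro mult_right_mono) auto
      also have "\<dots> = norm (complex_of_real c * (complex_of_real (A i j) * x j))"
        using c0 good_nn[OF A i j] by (simp add: norm_mult)
      finally show ?thesis .
    qed
    show sm: "(\<lambda>j. norm (complex_of_real (hadamard_pow A t i j) * x j)) summable_on R"
      by (rule Infinite_Sum.abs_summable_on_comparison_test[OF g]) (use cmp in simp)
    have "cmod (mat_op R (hadamard_pow A t) x i) = cmod (\<Sum>\<^sub>\<infinity>j\<in>R. complex_of_real (hadamard_pow A t i j) * x j)"
      using i by (simp add: mat_op_def)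
    also have "\<dots> \<le> (\<Sum>\<^sub>\<infinity>j\<in>R. norm (complex_of_real (hadamard_pow A t i j) * x j))"
      by (rule norm_infsum_bound[OF sm])
    also have "\<dots> \<le> (\<Sum>\<^sub>\<infinity>j\<in>R. norm (complex_of_real c * (complex_of_real (A i j) * x j)))"
      by (rule infsum_mono[OF sm g]) (rule cmp)
    also have "\<dots> = (\<Sum>\<^sub>\<infinity>j\<in>R. c * (A i j * cmod (x j)))"
      by (rule infsum_cong) (use c0 good_nn[OF A i] in \<open>simp add: norm_mult\<close>)
    also have "\<dots> = c * (\<Sum>\<^sub>\<infinity>j\<in>R. A i j * cmod (x j))"
      by (rule infsum_cmult_right) (rule mo_absv(2)[OF A x i])
    also have "\<dots> = c * Re (mat_op R A (absv x) i)" using mo_absv(1)[OF A x i] by simp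
    also have "\<dots> \<le> c * cmod (mat_op R A (absv x) i)" using c0 complex_Re_le_cmod by (rule mult_left_mono[rotated])
    also have "\<dots> = cmod (complex_of_real c * mat_op R A (absv x) i)" using c0 by (simp add: norm_mult)
    finally show "cmod (mat_op R (hadamard_pow A t) x i) \<le> cmod (complex_of_real c * mat_op R A (absv x) i)" .
  qed
  have inS: "mat_op R (hadamard_pow A t) x \<in> S" if x: "x \<in> S" for x
  proof (rule ideal_in[OF smul_in[OF good_in[OF A absv[OF x, THEN conjunct1]]], of _ "complex_of_real c"])
    fix i show "cmod (mat_op R (hadamard_pow A t) x i) \<le> cmod (complex_of_real c * mat_op R A (absv x) i)"
    proof (cases "i \<in> R")
      case True thus ?thesis using le[OF x True] by simp
    qed (simp add: mat_op_def)
  qed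
  show ?thesis unfolding good_def nonneg_matrix_def defines_operator_def
    using summ inS by (simp add: hadamard_pow_def)
qed

end


lemma sum_powr_le: fixes x :: "nat \<Rightarrow> real"
  assumes F: "finite F" and nn: "\<And>k. k \<in> F \<Longrightarrow> 0 \<le> x k" and t: "1 \<le> t"
  shows "(\<Sum>k\<in>F. x k powr t) \<le> (\<Sum>k\<in>F. x k) powr t"
proof -
  let ?K = "\<Sum>k\<in>F. x k"
  have K0: "?K \<ge> 0" using nn by (simp add: sum_nonneg)
  have "(\<Sum>k\<in>F. x k powr t) \<le> (\<Sum>k\<in>F. ?K powr (t-1) * x k)"
    by (rule sum_mono, rule powr_le_lin[OF nn _ t]) (use F nn in \<open>auto intro: member_le_sum\<close>)
  also have "\<dots> = ?K powr (t-1) * ?K" by (simp add: sum_distrib_left)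
  also have "\<dots> = ?K powr t"
  proof (cases "?K = 0")
    case True thus ?thesis using t by simp
  next
    case False
    hence "?K > 0" using K0 by simp
    thus ?thesis using powr_add[of ?K "t-1" 1] by simp
  qed
  finally show ?thesis .
qed

context bss
begin

lemma rep_real:
  assumes T: "lin_op T" and y: "y \<in> S"
    and yr: "\<And>k. k \<in> R \<Longrightarrow> y k = complex_of_real (Re (y k)) \<and> 0 \<le> Re (y k)"
    and Tr: "\<And>k. k \<in> R \<Longrightarrow> T (unit_vec k) i = complex_of_real (Re (T (unit_vec k) i)) \<and> 0 \<le> Re (T (unit_vec k) i)"
  shows "T y i = complex_of_real (Re (T y i))" "0 \<le> Re (T y i)"
    "(\<lambda>N. \<Sum>k\<in>{..<N} \<inter> R. Re (y k) * Re (T (unit_vec k) i)) \<longlonglongrightarrow> Re (T y i)"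
    "incseq (\<lambda>N. \<Sum>k\<in>{..<N} \<inter> R. Re (y k) * Re (T (unit_vec k) i))"
proof -
  define rp where "rp N = (\<Sum>k\<in>{..<N} \<inter> R. Re (y k) * Re (T (unit_vec k) i))" for N
  have eq: "(\<Sum>k\<in>{..<N} \<inter> R. y k * T (unit_vec k) i) = complex_of_real (rp N)" for N
  proof -
    have "(\<Sum>k\<in>{..<N} \<inter> R. y k * T (unit_vec k) i) = (\<Sum>k\<in>{..<N} \<inter> R. complex_of_real (Re (y k) * Re (T (unit_vec k) i)))"
    proof (rule sum.cong[OF refl])
      fix k assume "k \<in> {..<N} \<inter> R"
      hence k: "k \<in> R" by simp
      have "y k * T (unit_vec k) i = complex_of_real (Re (y k)) * complex_of_real (Re (T (unit_vec k) i))"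
        using yr[OF k] Tr[OF k] by metis
      thus "y k * T (unit_vec k) i = complex_of_real (Re (y k) * Re (T (unit_vec k) i))" by simp
    qed
    thus ?thesis unfolding rp_def by simp
  qed
  have lim: "(\<lambda>N. complex_of_real (rp N)) \<longlonglongrightarrow> T y i" using rep[OF T y, of i] unfolding eq .
  have "(\<lambda>N. Re (complex_of_real (rp N))) \<longlonglongrightarrow> Re (T y i)" by (rule tendsto_Re[OF lim])
  thus lr: "rp \<longlonglongrightarrow> Re (T y i)" by simp
  have "(\<lambda>N. Im (complex_of_real (rp N))) \<longlonglongrightarrow> Im (T y i)" by (rule tendsto_Im[OF lim])
  hence "(\<lambda>N. 0) \<longlonglongrightarrow> Im (T y i)" by simp
  hence "Im (T y i) = 0" using LIMSEQ_unique tendsto_const by blast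
  thus "T y i = complex_of_real (Re (T y i))" by (simp add: complex_eq_iff)
  have nn: "0 \<le> Re (y k) * Re (T (unit_vec k) i)" if "k \<in> R" for k using yr[OF that] Tr[OF that] by simp
  show "incseq rp" unfolding rp_def
  proof (rule incseq_SucI)
    fix N show "(\<Sum>k\<in>{..<N} \<inter> R. Re (y k) * Re (T (unit_vec k) i)) \<le> (\<Sum>k\<in>{..<Suc N} \<inter> R. Re (y k) * Re (T (unit_vec k) i))"
      by (rule sum_mono2) (auto intro: nn)
  qed
  show "0 \<le> Re (T y i)"
    by (rule LIMSEQ_le_const[OF lr]) (auto simp: rp_def intro!: sum_nonneg nn)
qed

definition Qrel :: "real \<Rightarrow> (cseq \<Rightarrow> cseq) \<Rightarrow> (cseq \<Rightarrow> cseq) \<Rightarrow> bool" where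
  "Qrel t U U' \<longleftrightarrow> lin_op U \<and> lin_op U' \<and> (\<forall>i\<in>R. \<forall>j\<in>R.
     U (unit_vec j) i = complex_of_real (Re (U (unit_vec j) i)) \<and> 0 \<le> Re (U (unit_vec j) i) \<and>
     U' (unit_vec j) i = complex_of_real (Re (U' (unit_vec j) i)) \<and> 0 \<le> Re (U' (unit_vec j) i) \<and>
     Re (U' (unit_vec j) i) \<le> Re (U (unit_vec j) i) powr t)"

lemma Qrel_id: "t \<ge> 1 \<Longrightarrow> Qrel t id id"
  unfolding Qrel_def by (auto simp: lin_id unit_vec_def)

lemma Qrel_step: assumes Q: "Qrel t U U'" and A: "good A" and t: "t \<ge> 1"
  shows "Qrel t (mat_op R A \<circ> U) (mat_op R (hadamard_pow A t) \<circ> U')"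
proof -
  have A': "good (hadamard_pow A t)" by (rule good_had[OF A t])
  have U: "lin_op U" and U': "lin_op U'" using Q by (auto simp: Qrel_def)
  have TA: "lin_op (mat_op R A)" and TA': "lin_op (mat_op R (hadamard_pow A t))" using good_lin A A' by auto
  have ent: "\<forall>i\<in>R. \<forall>j\<in>R.
     (mat_op R A \<circ> U) (unit_vec j) i = complex_of_real (Re ((mat_op R A \<circ> U) (unit_vec j) i)) \<and> 0 \<le> Re ((mat_op R A \<circ> U) (unit_vec j) i) \<and>
     (mat_op R (hadamard_pow A t) \<circ> U') (unit_vec j) i = complex_of_real (Re ((mat_op R (hadamard_pow A t) \<circ> U') (unit_vec j) i)) \<and>
     0 \<le> Re ((mat_op R (hadamard_pow A t) \<circ> U') (unit_vec j) i) \<and>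
     Re ((mat_op R (hadamard_pow A t) \<circ> U') (unit_vec j) i) \<le> Re ((mat_op R A \<circ> U) (unit_vec j) i) powr t"
  proof (intro ballI)
    fix i j assume i: "i \<in> R" and j: "j \<in> R"
    let ?y = "U (unit_vec j)" and ?y' = "U' (unit_vec j)"
    have yS: "?y \<in> S" and y'S: "?y' \<in> S" using lin_in U U' uv[OF j] by auto
    have yr: "?y k = complex_of_real (Re (?y k)) \<and> 0 \<le> Re (?y k)" if "k \<in> R" for k
      using Q that j by (auto simp: Qrel_def)
    have y'r: "?y' k = complex_of_real (Re (?y' k)) \<and> 0 \<le> Re (?y' k)" if "k \<in> R" for k
      using Q that j by (auto simp: Qrel_def)
    have yy: "Re (?y' k) \<le> Re (?y k) powr t" if "k \<in> R" for k
      using Q that j by (auto simp: Qrel_def)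
    have Tr: "mat_op R A (unit_vec k) i = complex_of_real (Re (mat_op R A (unit_vec k) i)) \<and> 0 \<le> Re (mat_op R A (unit_vec k) i)"
      if "k \<in> R" for k using mo_entry[OF i that] good_nn[OF A i that] by simp
    have Tr': "mat_op R (hadamard_pow A t) (unit_vec k) i = complex_of_real (Re (mat_op R (hadamard_pow A t) (unit_vec k) i)) \<and> 0 \<le> Re (mat_op R (hadamard_pow A t) (unit_vec k) i)"
      if "k \<in> R" for k using mo_entry[OF i that] by (simp add: hadamard_pow_def)
    note R1 = rep_real[OF TA yS yr Tr]
    note R2 = rep_real[OF TA' y'S y'r Tr']
    define rp where "rp N = (\<Sum>k\<in>{..<N} \<inter> R. Re (?y k) * Re (mat_op R A (unit_vec k) i))" for N
    define rp' where "rp' N = (\<Sum>k\<in>{..<N} \<inter> R. Re (?y' k) * Re (mat_op R (hadamard_pow A t) (unit_vec k) i))" for N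
    have l1: "rp \<longlonglongrightarrow> Re (mat_op R A ?y i)" using R1(3) unfolding rp_def .
    have l2: "rp' \<longlonglongrightarrow> Re (mat_op R (hadamard_pow A t) ?y' i)" using R2(3) unfolding rp'_def .
    have inc: "incseq rp" using R1(4) unfolding rp_def .
    have le: "rp' N \<le> Re (mat_op R A ?y i) powr t" for N
    proof -
      have "rp' N = (\<Sum>k\<in>{..<N} \<inter> R. Re (?y' k) * A i k powr t)"
        unfolding rp'_def by (rule sum.cong[OF refl]) (simp add: mo_entry[OF i] hadamard_pow_def)
      also have "\<dots> \<le> (\<Sum>k\<in>{..<N} \<inter> R. (Re (?y k) * A i k) powr t)"
      proof (rule sum_mono)
        fix k assume "k \<in> {..<N} \<inter> R"
        hence k: "k \<in> R" by simp
        have "Re (?y' k) * A i k powr t \<le> Re (?y k) powr t * A i k powr t"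
          using yy[OF k] by (intro mult_right_mono) auto
        also have "\<dots> = (Re (?y k) * A i k) powr t"
          using yr[OF k] good_nn[OF A i k] by (simp add: powr_mult)
        finally show "Re (?y' k) * A i k powr t \<le> (Re (?y k) * A i k) powr t" .
      qed
      also have "\<dots> \<le> (\<Sum>k\<in>{..<N} \<inter> R. Re (?y k) * A i k) powr t"
        by (rule sum_powr_le[OF _ _ t]) (use yr good_nn[OF A i] in auto)
      also have "(\<Sum>k\<in>{..<N} \<inter> R. Re (?y k) * A i k) = rp N"
        unfolding rp_def by (rule sum.cong[OF refl]) (simp add: mo_entry[OF i])
      also have "rp N powr t \<le> Re (mat_op R A ?y i) powr t"
      proof (rule powr_mono2)
        show "0 \<le> rp N" unfolding rp_def using yr Tr by (intro sum_nonneg) auto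
        show "rp N \<le> Re (mat_op R A ?y i)" by (rule incseq_le[OF inc l1])
      qed (use t in auto)
      finally show ?thesis .
    qed
    have fin: "Re (mat_op R (hadamard_pow A t) ?y' i) \<le> Re (mat_op R A ?y i) powr t"
      by (rule LIMSEQ_le_const2[OF l2]) (use le in auto)
    show "(mat_op R A \<circ> U) (unit_vec j) i = complex_of_real (Re ((mat_op R A \<circ> U) (unit_vec j) i)) \<and> 0 \<le> Re ((mat_op R A \<circ> U) (unit_vec j) i) \<and>
     (mat_op R (hadamard_pow A t) \<circ> U') (unit_vec j) i = complex_of_real (Re ((mat_op R (hadamard_pow A t) \<circ> U') (unit_vec j) i)) \<and>
     0 \<le> Re ((mat_op R (hadamard_pow A t) \<circ> U') (unit_vec j) i) \<and>
     Re ((mat_op R (hadamard_pow A t) \<circ> U') (unit_vec j) i) \<le> Re ((mat_op R A \<circ> U) (unit_vec j) i) powr t"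
      using R1(1,2) R2(1,2) fin by simp
  qed
  show ?thesis unfolding Qrel_def using lin_comp[OF TA U] lin_comp[OF TA' U'] ent by blast
qed

lemma Qrel_list: assumes t: "t \<ge> 1" shows "(\<forall>B\<in>set L. good B) \<Longrightarrow> Qrel t (prod_op R L) (prod_op R (map (\<lambda>B. hadamard_pow B t) L))"
proof (induction L)
  case Nil thus ?case using Qrel_id[OF t] by (simp add: prod_op_def id_def)
next
  case (Cons A L)
  have e1: "prod_op R (A # L) = mat_op R A \<circ> prod_op R L" unfolding prod_op_def by simp
  have e2: "prod_op R (map (\<lambda>B. hadamard_pow B t) (A # L)) = mat_op R (hadamard_pow A t) \<circ> prod_op R (map (\<lambda>B. hadamard_pow B t) L)"
    unfolding prod_op_def by simp
  show ?case unfolding e1 e2 using Cons by (intro Qrel_step t) auto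
qed

end


context bss
begin

definition has_net :: "cseq set \<Rightarrow> real \<Rightarrow> bool" where
  "has_net X \<eta> \<longleftrightarrow> (\<exists>M. finite M \<and> M \<subseteq> S \<and> (\<forall>x\<in>X. \<exists>m\<in>M. nrm (\<lambda>i. x i - m i) \<le> \<eta>))"

lemma has_net_mono: "has_net Y \<eta> \<Longrightarrow> X \<subseteq> Y \<Longrightarrow> has_net X \<eta>"
  unfolding has_net_def by blast

lemma has_net_sum:
  assumes X: "has_net X e1" "X \<subseteq> S" and Y: "has_net Y e2" "Y \<subseteq> S"
  shows "has_net {(\<lambda>i. x i + y i) | x y. x \<in> X \<and> y \<in> Y} (e1 + e2)"
proof -
  obtain M1 where M1: "finite M1" "M1 \<subseteq> S" "\<forall>x\<in>X. \<exists>m\<in>M1. nrm (\<lambda>i. x i - m i) \<le> e1"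
    using X(1) unfolding has_net_def by blast
  obtain M2 where M2: "finite M2" "M2 \<subseteq> S" "\<forall>x\<in>Y. \<exists>m\<in>M2. nrm (\<lambda>i. x i - m i) \<le> e2"
    using Y(1) unfolding has_net_def by blast
  define M where "M = (\<lambda>(a, b). (\<lambda>i. a i + b i)) ` (M1 \<times> M2)"
  have Mf: "finite M" unfolding M_def using M1 M2 by simp
  have MS: "M \<subseteq> S" unfolding M_def
  proof (clarsimp)
    fix a b assume "a \<in> M1" "b \<in> M2"
    thus "(\<lambda>i. a i + b i) \<in> S" using M1 M2 by (intro add_in) auto
  qed
  show ?thesis unfolding has_net_def
  proof (intro exI[of _ M] conjI Mf MS ballI)
    fix z assume "z \<in> {(\<lambda>i. x i + y i) | x y. x \<in> X \<and> y \<in> Y}"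
    then obtain x y where xy: "x \<in> X" "y \<in> Y" "z = (\<lambda>i. x i + y i)" by blast
    obtain a where a: "a \<in> M1" "nrm (\<lambda>i. x i - a i) \<le> e1" using M1(3) xy(1) by blast
    obtain b where b: "b \<in> M2" "nrm (\<lambda>i. y i - b i) \<le> e2" using M2(3) xy(2) by blast
    have S4: "x \<in> S" "y \<in> S" "a \<in> S" "b \<in> S" using xy X Y a b M1 M2 by auto
    have "(\<lambda>i. z i - (a i + b i)) = (\<lambda>i. (x i - a i) + (y i - b i))" unfolding xy by (simp add: algebra_simps)
    hence "nrm (\<lambda>i. z i - (a i + b i)) \<le> nrm (\<lambda>i. x i - a i) + nrm (\<lambda>i. y i - b i)"
      using nrm_tri[OF diff_in[OF S4(1,3)] diff_in[OF S4(2,4)]] by simp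
    moreover have "(\<lambda>i. a i + b i) \<in> M" unfolding M_def using a b by force
    moreover have "nrm (\<lambda>i. z i - (a i + b i)) \<le> e1 + e2" using calculation(1) a(2) b(2) by linarith
    ultimately show "\<exists>m\<in>M. nrm (\<lambda>i. z i - m i) \<le> e1 + e2" by (intro bexI[of _ "\<lambda>i. a i + b i"]) simp_all
  qed
qed

lemma has_net_scal: assumes w: "w \<in> S" and r: "r \<ge> 0" and eta: "\<eta> > 0"
  shows "has_net {(\<lambda>i. a * w i) | a. cmod a \<le> r} \<eta>"
proof -
  define e where "e = \<eta> / (nrm w + 1)"
  have nw: "nrm w \<ge> 0" using nrm_nonneg[OF w] .
  have e: "e > 0" unfolding e_def using eta nw by simp
  have cov: "cball (0::complex) r \<subseteq> (\<Union>c\<in>cball 0 r. ball c e)"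
  proof
    fix c :: complex assume "c \<in> cball 0 r" thus "c \<in> (\<Union>c\<in>cball 0 r. ball c e)" using e by (intro UN_I[of c]) auto
  qed
  obtain G :: "complex set" where G: "G \<subseteq> cball 0 r" "finite G" "cball 0 r \<subseteq> (\<Union>c\<in>G. ball c e)"
    using compactE_image[OF compact_cball open_ball cov] by blast
  define M where "M = (\<lambda>g. (\<lambda>i. g * w i)) ` G"
  show ?thesis unfolding has_net_def
  proof (intro exI[of _ M] conjI ballI)
    show "finite M" unfolding M_def using G by simp
    show "M \<subseteq> S" unfolding M_def using smul_in[OF w] by auto
    fix z assume "z \<in> {(\<lambda>i. a * w i) | a. cmod a \<le> r}"
    then obtain a where a: "cmod a \<le> r" "z = (\<lambda>i. a * w i)" by blast
    have "a \<in> cball 0 r" using a by simp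
    hence "a \<in> (\<Union>c\<in>G. ball c e)" by (rule subsetD[OF G(3)])
    then obtain g where g: "g \<in> G" "a \<in> ball g e" by blast
    hence g: "g \<in> G" "dist g a < e" by auto
    have "(\<lambda>i. z i - g * w i) = (\<lambda>i. (a - g) * w i)" unfolding a by (simp add: algebra_simps)
    hence "nrm (\<lambda>i. z i - g * w i) = cmod (a - g) * nrm w" using nrm_smul[OF w] by simp
    also have "\<dots> \<le> e * nrm w" using g(2) nw by (intro mult_right_mono) (auto simp: dist_norm norm_minus_commute)
    also have "\<dots> \<le> \<eta>"
    proof -
      have "e * nrm w = \<eta> * (nrm w / (nrm w + 1))" unfolding e_def by simp
      also have "\<dots> \<le> \<eta> * 1" using eta nw by (intro mult_left_mono) auto
      finally show ?thesis by simp
    qed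
    finally have "nrm (\<lambda>i. z i - g * w i) \<le> \<eta>" .
    moreover have "(\<lambda>i. g * w i) \<in> M" unfolding M_def using g by blast
    ultimately show "\<exists>m\<in>M. nrm (\<lambda>i. z i - m i) \<le> \<eta>" by (intro bexI[of _ "\<lambda>i. g * w i"]) simp_all
  qed
qed

lemma has_net_fin: assumes r: "r \<ge> 0"
  shows "finite K \<Longrightarrow> (\<And>k. k \<in> K \<Longrightarrow> w k \<in> S) \<Longrightarrow> \<eta> > 0 \<Longrightarrow>
    has_net {(\<lambda>i. \<Sum>k\<in>K. a k * w k i) | a. \<forall>k\<in>K. cmod (a k) \<le> r} \<eta>"
proof (induction K arbitrary: \<eta> rule: finite_induct)
  case empty
  show ?case unfolding has_net_def
    by (intro exI[of _ "{\<lambda>i. 0}"]) (use zero_in empty.prems zero_nrm in auto)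
next
  case (insert k K)
  have h1: "has_net {(\<lambda>i. a * w k i) | a. cmod a \<le> r} (\<eta>/2)"
    by (rule has_net_scal) (use insert.prems r in auto)
  have h2: "has_net {(\<lambda>i. \<Sum>k\<in>K. a k * w k i) | a. \<forall>k\<in>K. cmod (a k) \<le> r} (\<eta>/2)"
    by (rule insert.IH) (use insert.prems in auto)
  have s1: "{(\<lambda>i. a * w k i) | a. cmod a \<le> r} \<subseteq> S" using smul_in insert.prems by auto
  have s2: "{(\<lambda>i. \<Sum>k\<in>K. a k * w k i) | a. \<forall>k\<in>K. cmod (a k) \<le> r} \<subseteq> S"
  proof clarsimp
    fix a show "(\<lambda>i. \<Sum>k\<in>K. a k * w k i) \<in> S"
      by (rule sum_in[OF insert.hyps(1)]) (use smul_in insert.prems in auto)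
  qed
  have "has_net {(\<lambda>i. x i + y i) | x y. x \<in> {(\<lambda>i. a * w k i) | a. cmod a \<le> r} \<and>
           y \<in> {(\<lambda>i. \<Sum>k\<in>K. a k * w k i) | a. \<forall>k\<in>K. cmod (a k) \<le> r}} (\<eta>/2 + \<eta>/2)"
    by (rule has_net_sum[OF h1 s1 h2 s2])
  moreover have "{(\<lambda>i. \<Sum>k\<in>insert k K. a k * w k i) | a. \<forall>k\<in>insert k K. cmod (a k) \<le> r} \<subseteq>
     {(\<lambda>i. x i + y i) | x y. x \<in> {(\<lambda>i. a * w k i) | a. cmod a \<le> r} \<and>
           y \<in> {(\<lambda>i. \<Sum>k\<in>K. a k * w k i) | a. \<forall>k\<in>K. cmod (a k) \<le> r}}"
  proof
    fix z assume "z \<in> {(\<lambda>i. \<Sum>k\<in>insert k K. a k * w k i) | a. \<forall>k\<in>insert k K. cmod (a k) \<le> r}"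
    then obtain a where a: "\<forall>k\<in>insert k K. cmod (a k) \<le> r" "z = (\<lambda>i. \<Sum>k\<in>insert k K. a k * w k i)" by blast
    have z: "z = (\<lambda>i. a k * w k i + (\<Sum>k\<in>K. a k * w k i))" unfolding a(2) using insert.hyps by simp
    have m1: "(\<lambda>i. a k * w k i) \<in> {(\<lambda>i. a * w k i) | a. cmod a \<le> r}" using a(1) by blast
    have m2: "(\<lambda>i. \<Sum>k\<in>K. a k * w k i) \<in> {(\<lambda>i. \<Sum>k\<in>K. a k * w k i) | a. \<forall>k\<in>K. cmod (a k) \<le> r}"
      using a(1) by blast
    show "z \<in> {(\<lambda>i. x i + y i) | x y. x \<in> {(\<lambda>i. a * w k i) | a. cmod a \<le> r} \<and>
           y \<in> {(\<lambda>i. \<Sum>k\<in>K. a k * w k i) | a. \<forall>k\<in>K. cmod (a k) \<le> r}}"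
      unfolding z
      by (rule CollectI, rule exI[of _ "\<lambda>i. a k * w k i"], rule exI[of _ "\<lambda>i. \<Sum>k\<in>K. a k * w k i"],
          intro conjI m1 m2) simp
  qed
  ultimately have "has_net {(\<lambda>i. \<Sum>k\<in>insert k K. a k * w k i) | a. \<forall>k\<in>insert k K. cmod (a k) \<le> r} (\<eta>/2 + \<eta>/2)"
    by (rule has_net_mono)
  thus ?case by simp
qed

end


context bss
begin

lemma dom_core:
  assumes Q: "Qrel t C B" and t: "t \<ge> 1" and d: "hmnc S nrm C < \<delta>" and ep: "\<epsilon> > 0" and eta: "\<eta> > 0"
  shows "hmnc S nrm B \<le> \<eta> + (\<delta> + \<epsilon>) powr t"
proof -
  have C: "lin_op C" and B: "lin_op B" using Q by (auto simp: Qrel_def)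
  have QQ: "\<forall>i\<in>R. \<forall>j\<in>R.
     C (unit_vec j) i = complex_of_real (Re (C (unit_vec j) i)) \<and> 0 \<le> Re (C (unit_vec j) i) \<and>
     B (unit_vec j) i = complex_of_real (Re (B (unit_vec j) i)) \<and> 0 \<le> Re (B (unit_vec j) i) \<and>
     Re (B (unit_vec j) i) \<le> Re (C (unit_vec j) i) powr t" using Q by (simp add: Qrel_def)
  have entC: "C (unit_vec j) i = complex_of_real (Re (C (unit_vec j) i)) \<and> 0 \<le> Re (C (unit_vec j) i)"
    if "i \<in> R" "j \<in> R" for i j using bspec[OF bspec[OF QQ that(1)] that(2)] by simp
  have entB: "B (unit_vec j) i = complex_of_real (Re (B (unit_vec j) i)) \<and> 0 \<le> Re (B (unit_vec j) i)"
    if "i \<in> R" "j \<in> R" for i j using bspec[OF bspec[OF QQ that(1)] that(2)] by simp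
  have entBC: "Re (B (unit_vec j) i) \<le> Re (C (unit_vec j) i) powr t"
    if "i \<in> R" "j \<in> R" for i j using bspec[OF bspec[OF QQ that(1)] that(2)] by simp
  have dpos: "\<delta> > 0" using d hmnc_nonneg[OF C] by linarith
  obtain M where M: "finite M" "M \<subseteq> S"
    "\<And>x. x \<in> S \<Longrightarrow> nrm x \<le> 1 \<Longrightarrow> \<exists>m\<in>M. \<exists>y\<in>S. nrm y \<le> 1 \<and> C x = (\<lambda>i. m i + complex_of_real \<delta> * y i)"
    using hmnc_gt[OF C d] by blast
  obtain n where n: "\<forall>m\<in>M. nrm (Qn n m) \<le> \<epsilon>" using tail_small_fin[OF M(1,2) ep] by blast
  define c0 where "c0 = \<delta> + \<epsilon>"
  have c0: "c0 > 0" unfolding c0_def using dpos ep by simp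
  have claim1: "nrm (Qn n (C x)) \<le> c0" if x: "x \<in> S" "nrm x \<le> 1" for x
  proof -
    obtain m y where my: "m \<in> M" "y \<in> S" "nrm y \<le> 1" "C x = (\<lambda>i. m i + complex_of_real \<delta> * y i)"
      using M(3)[OF x] by blast
    have mS: "m \<in> S" using my M by blast
    have QmS: "Qn n m \<in> S" and QyS: "Qn n y \<in> S" using Qn mS my(2) by auto
    have "Qn n (C x) = (\<lambda>i. Qn n m i + complex_of_real \<delta> * Qn n y i)" unfolding my(4) by (auto simp: Qn_def)
    hence a1: "nrm (Qn n (C x)) \<le> nrm (Qn n m) + nrm (\<lambda>i. complex_of_real \<delta> * Qn n y i)"
      using nrm_tri[OF QmS smul_in[OF QyS]] by simp
    have a2: "nrm (\<lambda>i. complex_of_real \<delta> * Qn n y i) = \<delta> * nrm (Qn n y)"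
      using nrm_smul[OF QyS, of "complex_of_real \<delta>"] dpos by simp
    have a3: "nrm (Qn n y) \<le> 1" using Qn[OF my(2), of n] my(3) by linarith
    have a4: "\<delta> * nrm (Qn n y) \<le> \<delta> * 1" by (rule mult_left_mono[OF a3]) (use dpos in simp)
    have a5: "nrm (Qn n m) \<le> \<epsilon>" using n my(1) by blast
    show ?thesis using a1 a2 a4 a5 unfolding c0_def by linarith
  qed
  have claim2: "Re (C (unit_vec j) i) \<le> c0" if ij: "i \<in> R" "j \<in> R" and ni: "n \<le> i" for i j
  proof -
    have eS: "unit_vec j \<in> S" "nrm (unit_vec j) \<le> 1" using uv[OF ij(2)] by auto
    have "Re (C (unit_vec j) i) \<le> cmod (C (unit_vec j) i)" by (rule complex_Re_le_cmod)
    also have "\<dots> = cmod (Qn n (C (unit_vec j)) i)" using ni by (simp add: Qn_def)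
    also have "\<dots> \<le> nrm (Qn n (C (unit_vec j)))" using coord Qn lin_in[OF C eS(1)] by blast
    also have "\<dots> \<le> c0" by (rule claim1[OF eS])
    finally show ?thesis .
  qed
  define \<kappa> where "\<kappa> = c0 powr (t-1)"
  have k0: "\<kappa> \<ge> 0" unfolding \<kappa>_def by simp
  have claim3: "Re (B (unit_vec j) i) \<le> \<kappa> * Re (C (unit_vec j) i)" if ij: "i \<in> R" "j \<in> R" and ni: "n \<le> i" for i j
    using entBC[OF ij] powr_le_lin[of "Re (C (unit_vec j) i)" c0 t] entC[OF ij] claim2[OF ij ni] t
    unfolding \<kappa>_def by linarith
  have claim4: "nrm (Qn n (B x)) \<le> c0 powr t" if x: "x \<in> S" "nrm x \<le> 1" for x
  proof -
    define xa where "xa = absv x"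
    have xaS: "xa \<in> S" and nxa: "nrm xa \<le> 1" using absv[OF x(1)] x(2) by (auto simp: xa_def)
    have pw: "cmod (Qn n (B x) i) \<le> cmod (complex_of_real \<kappa> * Qn n (C xa) i)" for i
    proof (cases "n \<le> i \<and> i \<in> R")
      case True
      hence ni: "n \<le> i" and i: "i \<in> R" by auto
      have xar: "xa k = complex_of_real (Re (xa k)) \<and> 0 \<le> Re (xa k)" for k by (simp add: xa_def absv_def)
      note RC = rep_real[OF C xaS xar, of i, OF entC[OF i]]
      have lB: "(\<lambda>N. cmod (\<Sum>k\<in>{..<N} \<inter> R. x k * B (unit_vec k) i)) \<longlonglongrightarrow> cmod (B x i)"
        by (rule tendsto_norm[OF rep[OF B x(1)]])
      have lC: "(\<lambda>N. \<kappa> * (\<Sum>k\<in>{..<N} \<inter> R. Re (xa k) * Re (C (unit_vec k) i))) \<longlonglongrightarrow> \<kappa> * Re (C xa i)"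
        by (rule tendsto_mult_left[OF RC(3)])
      have "cmod (B x i) \<le> \<kappa> * Re (C xa i)"
      proof (rule LIMSEQ_le[OF lB lC], intro exI allI impI)
        fix N :: nat
        have "cmod (\<Sum>k\<in>{..<N} \<inter> R. x k * B (unit_vec k) i) \<le> (\<Sum>k\<in>{..<N} \<inter> R. cmod (x k * B (unit_vec k) i))"
          by (rule norm_sum)
        also have "\<dots> \<le> (\<Sum>k\<in>{..<N} \<inter> R. \<kappa> * (Re (xa k) * Re (C (unit_vec k) i)))"
        proof (rule sum_mono)
          fix k assume "k \<in> {..<N} \<inter> R"
          hence k: "k \<in> R" by simp
          have "cmod (x k * B (unit_vec k) i) = cmod (x k) * Re (B (unit_vec k) i)"
          proof -
            have "cmod (B (unit_vec k) i) = Re (B (unit_vec k) i)"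
              using entB[OF i k] by (metis abs_of_nonneg norm_of_real)
            thus ?thesis by (simp add: norm_mult)
          qed
          also have "\<dots> \<le> cmod (x k) * (\<kappa> * Re (C (unit_vec k) i))"
            by (rule mult_left_mono[OF claim3[OF i k ni]]) simp
          also have "\<dots> = \<kappa> * (Re (xa k) * Re (C (unit_vec k) i))" by (simp add: xa_def absv_def)
          finally show "cmod (x k * B (unit_vec k) i) \<le> \<kappa> * (Re (xa k) * Re (C (unit_vec k) i))" .
        qed
        also have "\<dots> = \<kappa> * (\<Sum>k\<in>{..<N} \<inter> R. Re (xa k) * Re (C (unit_vec k) i))" by (simp add: sum_distrib_left)
        finally show "cmod (\<Sum>k\<in>{..<N} \<inter> R. x k * B (unit_vec k) i) \<le> \<kappa> * (\<Sum>k\<in>{..<N} \<inter> R. Re (xa k) * Re (C (unit_vec k) i))" .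
      qed
      also have "\<dots> \<le> \<kappa> * cmod (C xa i)" by (rule mult_left_mono[OF complex_Re_le_cmod k0])
      also have "\<dots> = cmod (complex_of_real \<kappa> * C xa i)" using k0 by (simp add: norm_mult)
      finally show ?thesis using ni by (simp add: Qn_def)
    next
      case False
      hence "Qn n (B x) i = 0" using supp[OF lin_in[OF B x(1)]] by (auto simp: Qn_def)
      thus ?thesis by simp
    qed
    have QCS: "Qn n (C xa) \<in> S" using Qn lin_in[OF C xaS] by blast
    have "nrm (Qn n (B x)) \<le> nrm (\<lambda>i. complex_of_real \<kappa> * Qn n (C xa) i)"
      by (rule ideal_le[OF smul_in[OF QCS] pw])
    also have "\<dots> = \<kappa> * nrm (Qn n (C xa))" using nrm_smul[OF QCS, of "complex_of_real \<kappa>"] k0 by simp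
    also have "\<dots> \<le> \<kappa> * c0" by (rule mult_left_mono[OF claim1[OF xaS nxa] k0])
    also have "\<kappa> * c0 = c0 powr t" unfolding \<kappa>_def using powr_add[of c0 "t-1" 1] c0 by simp
    finally show ?thesis .
  qed
  obtain KB where KB: "KB \<ge> 0" "\<And>x. x \<in> S \<Longrightarrow> nrm (B x) \<le> KB * nrm x" using lin_bound[OF B] by blast
  have net: "has_net {(\<lambda>i. \<Sum>k\<in>{..<n} \<inter> R. a k * unit_vec k i) | a. \<forall>k\<in>{..<n} \<inter> R. cmod (a k) \<le> KB} \<eta>"
    by (rule has_net_fin[OF KB(1)]) (use uv eta in auto)
  then obtain M' where M': "finite M'" "M' \<subseteq> S"
    "\<forall>z\<in>{(\<lambda>i. \<Sum>k\<in>{..<n} \<inter> R. a k * unit_vec k i) | a. \<forall>k\<in>{..<n} \<inter> R. cmod (a k) \<le> KB}. \<exists>m\<in>M'. nrm (\<lambda>i. z i - m i) \<le> \<eta>"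
    unfolding has_net_def by blast
  show ?thesis
  proof (rule hmnc_le[OF M'(1,2)])
    show "\<eta> + (\<delta> + \<epsilon>) powr t > 0" using eta by (simp add: add_pos_nonneg)
    fix x assume x: "x \<in> S" "nrm x \<le> 1"
    have BxS: "B x \<in> S" by (rule lin_in[OF B x(1)])
    have bnd: "cmod (B x k) \<le> KB" for k
    proof -
      have "cmod (B x k) \<le> nrm (B x)" by (rule coord[OF BxS])
      also have "\<dots> \<le> KB * nrm x" by (rule KB(2)[OF x(1)])
      also have "\<dots> \<le> KB * 1" by (rule mult_left_mono[OF x(2) KB(1)])
      finally show ?thesis by simp
    qed
    have "Pn n (B x) \<in> {(\<lambda>i. \<Sum>k\<in>{..<n} \<inter> R. a k * unit_vec k i) | a. \<forall>k\<in>{..<n} \<inter> R. cmod (a k) \<le> KB}"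
      unfolding Pn_sum[OF BxS]
      by (rule CollectI, rule exI[of _ "\<lambda>k. B x k"], intro conjI refl ballI bnd)
    then obtain m where m: "m \<in> M'" "nrm (\<lambda>i. Pn n (B x) i - m i) \<le> \<eta>" using bspec[OF M'(3)] by blast
    have mS: "m \<in> S" using m M' by blast
    have PS: "(\<lambda>i. Pn n (B x) i - m i) \<in> S" using diff_in Pn[OF BxS] mS by blast
    have QS: "Qn n (B x) \<in> S" using Qn[OF BxS] by blast
    have "(\<lambda>i. B x i - m i) = (\<lambda>i. (Pn n (B x) i - m i) + Qn n (B x) i)" by (auto simp: Pn_def Qn_def)
    hence "nrm (\<lambda>i. B x i - m i) \<le> nrm (\<lambda>i. Pn n (B x) i - m i) + nrm (Qn n (B x))"
      using nrm_tri[OF PS QS] by simp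
    also have "\<dots> \<le> \<eta> + (\<delta> + \<epsilon>) powr t" using m(2) claim4[OF x] unfolding c0_def by linarith
    finally show "B x \<in> S \<and> (\<exists>m\<in>M'. nrm (\<lambda>i. B x i - m i) \<le> \<eta> + (\<delta> + \<epsilon>) powr t)" using BxS m(1) by blast
  qed
qed

end


context bss
begin

lemma dom: assumes Q: "Qrel t C B" and t: "t \<ge> 1"
  shows "hmnc S nrm B \<le> hmnc S nrm C powr t"
proof (rule ccontr)
  have C: "lin_op C" using Q by (simp add: Qrel_def)
  define g where "g = hmnc S nrm C"
  have g0: "g \<ge> 0" unfolding g_def by (rule hmnc_nonneg[OF C])
  assume "\<not> ?thesis"
  hence gap: "hmnc S nrm B - g powr t > 0" unfolding g_def by simp
  define d where "d = hmnc S nrm B - g powr t"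
  have d: "d > 0" using gap by (simp add: d_def)
  have pos: "\<forall>\<^sub>F s in at_right (0::real). 0 < s" by (rule eventually_at_right_less)
  have l1: "((\<lambda>s. g + s + s) \<longlongrightarrow> g) (at_right (0::real))"
  proof -
    have "((\<lambda>s. g + s + s) \<longlongrightarrow> g + 0 + 0) (at_right (0::real))"
      by (intro tendsto_intros)
    thus ?thesis by simp
  qed
  have l2: "((\<lambda>s. (g + s + s) powr t) \<longlongrightarrow> g powr t) (at_right (0::real))"
  proof (rule tendsto_powr'[OF l1 tendsto_const])
    show "g \<noteq> 0 \<or> (t > 0 \<and> (\<forall>\<^sub>F s in at_right 0. 0 \<le> g + s + s))"
      using t g0 by (intro disjI2 conjI) (auto intro: eventually_mono[OF pos])
  qed
  have "\<forall>\<^sub>F s in at_right (0::real). (g + s + s) powr t < g powr t + d/2"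
    by (rule order_tendstoD(2)[OF l2]) (use d in simp)
  hence "\<forall>\<^sub>F s in at_right (0::real). 0 < s \<and> (g + s + s) powr t < g powr t + d/2"
    using pos by (simp add: eventually_conj)
  then obtain s :: real where s: "0 < s" "(g + s + s) powr t < g powr t + d/2"
    using eventually_happens'[OF trivial_limit_at_right_real] by blast
  have "hmnc S nrm B \<le> d/2 + (g + s + s) powr t"
  proof -
    have "hmnc S nrm B \<le> d/2 + ((g + s) + s) powr t"
      by (rule dom_core[OF Q t]) (use s d in \<open>auto simp: g_def\<close>)
    thus ?thesis by simp
  qed
  moreover have "\<forall>h p z::real. h \<le> (h-p)/2 + z \<longrightarrow> z < p + (h-p)/2 \<longrightarrow> False" by (simp add: field_simps)
  ultimately show False using s(2) unfolding d_def by blast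
qed

lemma funpow_hmnc:
  assumes T: "lin_op T"
  shows "hmnc S nrm (T ^^ (p + q)) \<le> hmnc S nrm (T ^^ p) * hmnc S nrm (T ^^ q)"
  using hmnc_submult[OF lin_funpow[OF T] lin_funpow[OF T], of p q] by (simp add: funpow_add)

lemma fekete: assumes T: "lin_op T"
  shows "convergent (\<lambda>j. root j (hmnc S nrm (T ^^ j)))"
proof -
  define h where "h j = hmnc S nrm (T ^^ j)" for j
  define a where "a j = root j (h j)" for j
  have h0: "h j \<ge> 0" for j unfolding h_def by (rule hmnc_nonneg[OF lin_funpow[OF T]])
  have a0: "a j \<ge> 0" for j unfolding a_def by (rule real_root_ge_zero[OF h0])
  have hsub: "h (p + q) \<le> h p * h q" for p q unfolding h_def by (rule funpow_hmnc[OF T])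
  have hz: "h 0 \<le> 1" unfolding h_def using hmnc_id by simp
  define G where "G = max 1 (h 1)"
  have G1: "G \<ge> 1" by (simp add: G_def)
  have hG: "h r \<le> G ^ r" for r
  proof (induction r)
    case 0 thus ?case using hz by simp
  next
    case (Suc r)
    have "h (Suc r) = h (1 + r)" by simp
    also have "\<dots> \<le> h 1 * h r" by (rule hsub)
    also have "\<dots> \<le> G * G ^ r" using Suc h0 by (intro mult_mono) (auto simp: G_def)
    finally show ?case by simp
  qed
  have hq: "h (q * k + r) \<le> h k ^ q * h r" for q k r
  proof (induction q)
    case 0 thus ?case by simp
  next
    case (Suc q)
    have "h (Suc q * k + r) = h (k + (q * k + r))" by (simp add: algebra_simps)
    also have "\<dots> \<le> h k * h (q * k + r)" by (rule hsub)
    also have "\<dots> \<le> h k * (h k ^ q * h r)" using Suc h0 by (intro mult_left_mono) auto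
    finally show ?case by (simp add: algebra_simps)
  qed
  define l where "l = Inf (a ` {1..})"
  have bdd: "bdd_below (a ` {1..})" using a0 by (intro bdd_belowI[of _ 0]) auto
  have ne: "a ` {1..} \<noteq> {}" by auto
  have l0: "l \<ge> 0" unfolding l_def by (rule cInf_greatest[OF ne]) (use a0 in auto)
  have lower: "l \<le> a j" if "j \<ge> 1" for j unfolding l_def by (rule cInf_lower[OF _ bdd]) (use that in auto)
  have "a \<longlonglongrightarrow> l"
  proof (rule LIMSEQ_I)
    fix e :: real assume e: "e > 0"
    obtain ak where "ak \<in> a ` {1..}" "ak < l + e/2"
      using cInf_lessD[OF ne, of "l + e/2"] e unfolding l_def[symmetric] by auto
    then obtain k where k: "k \<ge> 1" "a k < l + e/2" by auto
    define c where "c = l + e/2"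
    have c: "c > 0" using l0 e by (simp add: c_def)
    have hk: "h k \<le> c ^ k"
    proof -
      have "h k = a k ^ k" unfolding a_def using k h0 by simp
      also have "\<dots> \<le> c ^ k" using k a0 by (intro power_mono) (auto simp: c_def)
      finally show ?thesis .
    qed
    define H where "H = G ^ k * (max 1 (1/c)) ^ k"
    have H: "H > 0" using G1 by (simp add: H_def)
    have hj: "h j \<le> c ^ j * H" for j
    proof -
      define q where "q = j div k" define r where "r = j mod k"
      have jqr: "j = q * k + r" by (simp add: q_def r_def)
      have rk: "r < k" using k by (simp add: r_def)
      have "h j \<le> h k ^ q * h r" unfolding jqr by (rule hq)
      also have "\<dots> \<le> (c ^ k) ^ q * G ^ k"
      proof (rule mult_mono)
        show "h k ^ q \<le> (c ^ k) ^ q" using hk h0 by (intro power_mono) auto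
        show "h r \<le> G ^ k" using hG[of r] power_increasing[of r k G] rk G1 by linarith
      qed (use c h0 in auto)
      also have "(c ^ k) ^ q = c ^ j * (1/c) ^ r"
      proof -
        have "c ^ j = c ^ (q * k) * c ^ r" unfolding jqr by (simp add: power_add)
        hence "c ^ j * (1/c) ^ r = c ^ (q * k)" using c by (simp add: power_one_over field_simps)
        thus ?thesis by (simp add: power_mult mult.commute)
      qed
      also have "c ^ j * (1/c) ^ r * G ^ k \<le> c ^ j * (max 1 (1/c)) ^ k * G ^ k"
      proof -
        have "(1/c) ^ r \<le> (max 1 (1/c)) ^ r" using c by (intro power_mono) auto
        also have "\<dots> \<le> (max 1 (1/c)) ^ k" using rk by (intro power_increasing) auto
        finally have "(1/c) ^ r \<le> (max 1 (1/c)) ^ k" .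
        thus ?thesis using c G1 by (intro mult_right_mono mult_left_mono) auto
      qed
      also have "\<dots> = c ^ j * H" by (simp add: H_def)
      finally show ?thesis .
    qed
    have aj: "a j \<le> c * root j H" if "j \<ge> 1" for j
    proof -
      have "a j \<le> root j (c ^ j * H)" unfolding a_def by (rule real_root_le_mono) (use that hj in auto)
      also have "\<dots> = c * root j H" using that c by (simp add: real_root_mult real_root_power_cancel)
      finally show ?thesis .
    qed
    have "(\<lambda>j. c * root j H) \<longlonglongrightarrow> c * 1" by (intro tendsto_mult tendsto_const LIMSEQ_root_const H)
    moreover have "c * 1 < l + e" using e by (simp add: c_def)
    ultimately have "\<forall>\<^sub>F j in sequentially. c * root j H < l + e" by (rule order_tendstoD(2))
    then obtain N where N: "\<And>j. j \<ge> N \<Longrightarrow> c * root j H < l + e" by (auto simp: eventually_sequentially)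
    show "\<exists>no. \<forall>j\<ge>no. norm (a j - l) < e"
    proof (intro exI[of _ "max N 1"] allI impI)
      fix j assume "max N 1 \<le> j"
      hence j: "j \<ge> N" "j \<ge> 1" by auto
      have "a j < l + e" using aj[OF j(2)] N[OF j(1)] by linarith
      moreover have "l \<le> a j" by (rule lower[OF j(2)])
      ultimately show "norm (a j - l) < e" using e by simp
    qed
  qed
  thus ?thesis unfolding a_def h_def convergent_def by blast
qed

lemma prod_op_app: "foldr (\<lambda>A T. mat_op R A \<circ> T) xs Z = prod_op R xs \<circ> Z"
  by (induction xs) (simp_all add: prod_op_def comp_assoc)

lemma prod_op_pow: "prod_op R L ^^ j = prod_op R (concat (replicate j L))"
proof (induction j)
  case 0 thus ?case by (simp add: prod_op_def)
next
  case (Suc j)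
  have "prod_op R L ^^ Suc j = prod_op R L \<circ> prod_op R (concat (replicate j L))" using Suc by simp
  also have "\<dots> = foldr (\<lambda>A T. mat_op R A \<circ> T) L (prod_op R (concat (replicate j L)))"
    by (rule prod_op_app[symmetric])
  also have "\<dots> = prod_op R (L @ concat (replicate j L))" by (simp add: prod_op_def)
  finally show ?case by simp
qed

lemma main_list:
  assumes t: "t \<ge> 1" and As: "\<forall>B\<in>set As. good B"
  shows "hmnc S nrm (prod_op R (map (\<lambda>B. hadamard_pow B t) As)) \<le> hmnc S nrm (prod_op R As) powr t"
    and "ess_spec_rad S nrm (prod_op R (map (\<lambda>B. hadamard_pow B t) As)) \<le> ess_spec_rad S nrm (prod_op R As) powr t"
proof -
  let ?U = "prod_op R As" and ?U' = "prod_op R (map (\<lambda>B. hadamard_pow B t) As)"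
  have Q: "Qrel t ?U ?U'" by (rule Qrel_list[OF t As])
  show "hmnc S nrm ?U' \<le> hmnc S nrm ?U powr t" by (rule dom[OF Q t])
  have U: "lin_op ?U" and U': "lin_op ?U'" using Q by (auto simp: Qrel_def)
  have Qj: "Qrel t (?U ^^ j) (?U' ^^ j)" for j
  proof -
    have "Qrel t (prod_op R (concat (replicate j As))) (prod_op R (map (\<lambda>B. hadamard_pow B t) (concat (replicate j As))))"
      by (rule Qrel_list[OF t]) (use As in auto)
    thus ?thesis unfolding prod_op_pow by (simp add: map_concat)
  qed
  define a where "a j = root j (hmnc S nrm (?U ^^ j))" for j
  define a' where "a' j = root j (hmnc S nrm (?U' ^^ j))" for j
  have a0: "a j \<ge> 0" for j unfolding a_def by (rule real_root_ge_zero[OF hmnc_nonneg[OF lin_funpow[OF U]]])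
  have le: "a' j \<le> a j powr t" for j
  proof (cases "j = 0")
    case True thus ?thesis by (simp add: a_def a'_def)
  next
    case False
    hence j: "0 < j" by simp
    have h0: "hmnc S nrm (?U ^^ j) \<ge> 0" by (rule hmnc_nonneg[OF lin_funpow[OF U]])
    have "a' j \<le> root j (hmnc S nrm (?U ^^ j) powr t)"
      unfolding a'_def by (rule real_root_le_mono[OF j dom[OF Qj t]])
    also have "\<dots> = (hmnc S nrm (?U ^^ j) powr t) powr (1/j)" using j by (simp add: root_powr_inverse)
    also have "\<dots> = (hmnc S nrm (?U ^^ j) powr (1/j)) powr t" by (simp add: powr_powr mult.commute)
    also have "\<dots> = a j powr t" unfolding a_def using j h0 by (simp add: root_powr_inverse)
    finally show ?thesis .
  qed
  obtain La where La: "a \<longlonglongrightarrow> La" using fekete[OF U] unfolding a_def convergent_def by blast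
  obtain La' where La': "a' \<longlonglongrightarrow> La'" using fekete[OF U'] unfolding a'_def convergent_def by blast
  have Lp: "(\<lambda>j. a j powr t) \<longlonglongrightarrow> La powr t"
    by (rule tendsto_powr'[OF La tendsto_const]) (use t a0 in auto)
  have "La' \<le> La powr t" by (rule LIMSEQ_le[OF La' Lp]) (use le in auto)
  moreover have "ess_spec_rad S nrm ?U = La" unfolding ess_spec_rad_def using La unfolding a_def by (rule limI)
  moreover have "ess_spec_rad S nrm ?U' = La'" unfolding ess_spec_rad_def using La' unfolding a'_def by (rule limI)
  ultimately show "ess_spec_rad S nrm ?U' \<le> ess_spec_rad S nrm ?U powr t" by simp
qed

end

theorem theorem3p2:
  fixes R :: "nat set" and S :: "(nat \<Rightarrow> complex) set" and nrm :: "(nat \<Rightarrow> complex) \<Rightarrow> real"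
    and t :: real and A :: "nat \<Rightarrow> nat \<Rightarrow> real" and As :: "(nat \<Rightarrow> nat \<Rightarrow> real) list"
  assumes L: "in_class_L R S nrm"
    and ocL: "order_continuous_seq S nrm"
    and ocD: "order_continuous_dual S nrm"
    and t: "t \<ge> 1"
    and A: "nonneg_matrix R A" "defines_operator R S A"
    and As: "As \<noteq> []" "\<forall>B\<in>set As. nonneg_matrix R B \<and> defines_operator R S B"
  shows "hmnc S nrm (mat_op R (hadamard_pow A t)) \<le> hmnc S nrm (mat_op R A) powr t
       \<and> ess_spec_rad S nrm (mat_op R (hadamard_pow A t)) \<le> ess_spec_rad S nrm (mat_op R A) powr t
       \<and> hmnc S nrm (prod_op R (map (\<lambda>B. hadamard_pow B t) As)) \<le> hmnc S nrm (prod_op R As) powr t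
       \<and> ess_spec_rad S nrm (prod_op R (map (\<lambda>B. hadamard_pow B t) As))
           \<le> ess_spec_rad S nrm (prod_op R As) powr t"
proof -
  interpret bss R S nrm using L ocL by unfold_locales
  have gA: "\<forall>B\<in>set [A]. good B" using A by (simp add: good_def)
  have gAs: "\<forall>B\<in>set As. good B" using As(2) by (simp add: good_def)
  have e1: "prod_op R [A] = mat_op R A" by (simp add: prod_op_def)
  have e2: "prod_op R (map (\<lambda>B. hadamard_pow B t) [A]) = mat_op R (hadamard_pow A t)" by (simp add: prod_op_def)
  show ?thesis
    using main_list[OF t gA] main_list[OF t gAs] unfolding e1 e2 by blast
qed


end
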